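(* Under the hypotheses of Theorem 1 (convex $f_i$ with subgradients bounded by $L$, closed convex $\Omega$, $W$ nonnegative doubly stochastic with positive diagonal and strongly connected positive-entry graph, second-largest singular value $\sigma<1$; positive nonincreasing step-sizes $\alpha(t)$, square summable but not summable, with $\sum_{k=1}^t\alpha(k)\le C_\alpha\sum_{k=\lceil t/2\rceil}^t\alpha(k)$ and $\alpha(\lfloor t/2\rfloor)\le C_\alpha'\alpha(t)$ for all $t$; iteration $x(t+1)=W P_\Omega[x(t)-\alpha(t)g(t)]$ with identical initial rows in $\Omega$), there is an absolute constant $c>0$ such that for all $t$ with $$t\ge\frac{c}{1-\sigma}\log\frac{(1-\sigma)\,t\,\alpha_{\max}}{C_\alpha'\alpha(t)}$$ we have $$\|x(t)-\mathbf 1\overline{x}(t)\|_F\le\frac{2C_\alpha'\alpha(t)L\sqrt n}{1-\sigma}.$$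
   Context: $x(t)$ is the $n\times d$ matrix with rows $x_i(t)$; $g(t)$ has rows $g_i(t)$, a subgradient of $f_i$ at $x_i(t)$; $P_\Omega$ is row-wise Euclidean projection onto $\Omega$; $\overline{x}(t)=\frac1n\sum_i x_i(t)$ (a row vector), $\mathbf 1$ is the all-ones column vector in $\mathbb{R}^n$, so $\mathbf 1\overline{x}(t)$ is $n\times d$; $\|\cdot\|_F$ is the Frobenius norm; $\alpha_{\max}=\max_t\alpha(t)$. *)

theory Defs
  imports Complex_Main "Jordan_Normal_Form.Char_Poly" "HOL-Computational_Algebra.Polynomial"
begin

text \<open>Rows of the n x d iterate matrices are vectors of R^d, represented as real vec of
  dimension d (Jordan_Normal_Form). The number of agents n and the dimension d are
  natural numbers, so that the constant c can be stated independently of them.\<close>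

definition vnorm :: "real vec \<Rightarrow> real" where
  "vnorm v = sqrt (v \<bullet> v)"

definition frob :: "real mat \<Rightarrow> real" where
  "frob A = sqrt (\<Sum>i<dim_row A. \<Sum>k<dim_col A. (A $$ (i,k))^2)"

definition convex_vset :: "nat \<Rightarrow> real vec set \<Rightarrow> bool" where
  "convex_vset d S \<longleftrightarrow> S \<subseteq> carrier_vec d \<and>
     (\<forall>u\<in>S. \<forall>v\<in>S. \<forall>\<theta>::real. 0 \<le> \<theta> \<and> \<theta> \<le> 1 \<longrightarrow> \<theta> \<cdot>\<^sub>v u + (1 - \<theta>) \<cdot>\<^sub>v v \<in> S)"

definition closed_vset :: "nat \<Rightarrow> real vec set \<Rightarrow> bool" where
  "closed_vset d S \<longleftrightarrow> S \<subseteq> carrier_vec d \<and>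
     (\<forall>s v. (\<forall>k. s k \<in> S) \<and> v \<in> carrier_vec d \<and> (\<lambda>k. vnorm (s k - v)) \<longlonglongrightarrow> 0 \<longrightarrow> v \<in> S)"

definition convex_vfun :: "nat \<Rightarrow> (real vec \<Rightarrow> real) \<Rightarrow> bool" where
  "convex_vfun d h \<longleftrightarrow>
     (\<forall>u\<in>carrier_vec d. \<forall>v\<in>carrier_vec d. \<forall>\<theta>::real. 0 \<le> \<theta> \<and> \<theta> \<le> 1 \<longrightarrow>
        h (\<theta> \<cdot>\<^sub>v u + (1 - \<theta>) \<cdot>\<^sub>v v) \<le> \<theta> * h u + (1 - \<theta>) * h v)"

definition subgrad :: "nat \<Rightarrow> (real vec \<Rightarrow> real) \<Rightarrow> real vec \<Rightarrow> real vec \<Rightarrow> bool" where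
  "subgrad d h u s \<longleftrightarrow> s \<in> carrier_vec d \<and>
     (\<forall>y\<in>carrier_vec d. h y \<ge> h u + s \<bullet> (y - u))"

definition proj :: "real vec set \<Rightarrow> real vec \<Rightarrow> real vec" where
  "proj S v = (SOME p. p \<in> S \<and> (\<forall>q\<in>S. vnorm (v - p) \<le> vnorm (v - q)))"

definition singular_values :: "real mat \<Rightarrow> real multiset" where
  "singular_values A = image_mset sqrt (proots (char_poly (transpose_mat A * A)))"

text \<open>Second-largest singular value (0 if there is no second one, i.e. for 1 x 1 matrices).\<close>
definition second_singular_value :: "real mat \<Rightarrow> real" where
  "second_singular_value A =
     (let l = rev (sorted_list_of_multiset (singular_values A)) in
      if length l \<ge> 2 then l ! 1 else 0)"

definition doubly_stochastic_pos :: "nat \<Rightarrow> real mat \<Rightarrow> bool" where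
  "doubly_stochastic_pos n W \<longleftrightarrow> W \<in> carrier_mat n n \<and>
     (\<forall>i<n. \<forall>j<n. W $$ (i,j) \<ge> 0) \<and>
     (\<forall>i<n. (\<Sum>j<n. W $$ (i,j)) = 1) \<and>
     (\<forall>j<n. (\<Sum>i<n. W $$ (i,j)) = 1) \<and>
     (\<forall>i<n. W $$ (i,i) > 0)"

definition strongly_connected_mat :: "nat \<Rightarrow> real mat \<Rightarrow> bool" where
  "strongly_connected_mat n W \<longleftrightarrow>
     (\<forall>i<n. \<forall>j<n. (i,j) \<in> {(a,b). a < n \<and> b < n \<and> W $$ (a,b) > 0}\<^sup>*)"

text \<open>The matrix 1 xbar(t): every row equals the average of the rows of X.\<close>
definition avg_mat :: "real mat \<Rightarrow> real mat" where
  "avg_mat X = mat (dim_row X) (dim_col X)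
     (\<lambda>(i,k). (1 / real (dim_row X)) * (\<Sum>j<dim_row X. X $$ (j,k)))"

end

theory Submission
  imports Defs "Jordan_Normal_Form.Schur_Decomposition"
begin


definition mtr :: "'a::comm_ring_1 mat \<Rightarrow> 'a" where
  "mtr A = (\<Sum>i<dim_row A. A $$ (i,i))"

lemma mtr_mult_comm:
  assumes A: "A \<in> carrier_mat n m" and B: "B \<in> carrier_mat m n"
  shows "mtr (A * B) = mtr (B * A)"
proof -
  have "mtr (A * B) = (\<Sum>i<n. \<Sum>j<m. A $$ (i,j) * B $$ (j,i))"
    unfolding mtr_def using A B
    by (auto simp: scalar_prod_def atLeast0LessThan intro!: sum.cong)
  also have "\<dots> = (\<Sum>j<m. \<Sum>i<n. B $$ (j,i) * A $$ (i,j))"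
    by (subst sum.swap) (simp add: mult.commute)
  also have "\<dots> = mtr (B * A)"
    unfolding mtr_def using A B
    by (auto simp: scalar_prod_def atLeast0LessThan intro!: sum.cong)
  finally show ?thesis .
qed

lemma ut_mult_entry:
  assumes A: "A \<in> carrier_mat n n" and B: "B \<in> carrier_mat n n"
    and uA: "upper_triangular A" and uB: "upper_triangular B"
    and i: "i < n" and j: "j < n" and ji: "j \<le> i"
  shows "(A * B) $$ (i,j) = (if i = j then A $$ (i,i) * B $$ (i,i) else 0)"
proof -
  have "(A * B) $$ (i,j) = (\<Sum>k\<in>{..<n}. A $$ (i,k) * B $$ (k,j))"
    using A B i j by (auto simp: scalar_prod_def atLeast0LessThan intro!: sum.cong)
  also have "\<dots> = A $$ (i,i) * B $$ (i,j) + (\<Sum>k\<in>{..<n}-{i}. A $$ (i,k) * B $$ (k,j))"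
    using i by (subst sum.remove[of _ i]) auto
  also have "(\<Sum>k\<in>{..<n}-{i}. A $$ (i,k) * B $$ (k,j)) = 0"
  proof (rule sum.neutral, rule ballI)
    fix k assume k': "k \<in> {..<n} - {i}"
    then have k: "k < n" "k \<noteq> i" by auto
    show "A $$ (i,k) * B $$ (k,j) = 0"
    proof (cases "k < i")
      case True then have "A $$ (i,k) = 0" using uA A i by (intro upper_triangularD) auto
      then show ?thesis by simp
    next
      case False then have "j < k" using k ji by auto
      then have "B $$ (k,j) = 0" using uB B k by (intro upper_triangularD) auto
      then show ?thesis by simp
    qed
  qed
  also have "B $$ (i,j) = (if i = j then B $$ (i,i) else 0)"
    using uB B i ji by (auto intro: upper_triangularD)
  finally show ?thesis by auto
qed

lemma ut_pow:
  fixes B :: "'a::comm_ring_1 mat"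
  assumes B: "B \<in> carrier_mat n n" and uB: "upper_triangular B"
  shows "upper_triangular (B ^\<^sub>m k) \<and> (\<forall>i<n. (B ^\<^sub>m k) $$ (i,i) = (B $$ (i,i)) ^ k)"
proof (induct k)
  case 0
  have "upper_triangular (B ^\<^sub>m 0)" using B by simp
  moreover have "\<forall>i<n. (B ^\<^sub>m 0) $$ (i,i) = (B $$ (i,i)) ^ 0" using B by simp
  ultimately show ?case by blast
next
  case (Suc k)
  have P: "B ^\<^sub>m k \<in> carrier_mat n n" using B by (rule pow_carrier_mat)
  have e: "\<And>i j. i < n \<Longrightarrow> j \<le> i \<Longrightarrow> (B ^\<^sub>m k * B) $$ (i,j) = (if i = j then (B ^\<^sub>m k) $$ (i,i) * B $$ (i,i) else 0)"
    using ut_mult_entry[OF P B] Suc uB by (meson le_less_trans)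
  have "upper_triangular (B ^\<^sub>m Suc k)"
  proof (rule upper_triangularI)
    fix i j assume "j < i" "i < dim_row (B ^\<^sub>m Suc k)"
    then show "(B ^\<^sub>m Suc k) $$ (i,j) = 0" using e[of i j] B by simp
  qed
  moreover have "\<forall>i<n. (B ^\<^sub>m Suc k) $$ (i,i) = (B $$ (i,i)) ^ Suc k"
  proof (intro allI impI)
    fix i assume i: "i < n"
    have "(B ^\<^sub>m Suc k) $$ (i,i) = (B ^\<^sub>m k) $$ (i,i) * B $$ (i,i)" using e[of i i] i by simp
    also have "\<dots> = (B $$ (i,i)) ^ Suc k" using Suc i by (simp del: power_Suc add: power_Suc2)
    finally show "(B ^\<^sub>m Suc k) $$ (i,i) = (B $$ (i,i)) ^ Suc k" .
  qed
  ultimately show ?case by blast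
qed

lemma mtr_pow_factorized:
  fixes A :: "complex mat"
  assumes A: "A \<in> carrier_mat n n"
    and c: "char_poly A = (\<Prod>a\<leftarrow>as. [:- a, 1:])"
  shows "mtr (A ^\<^sub>m k) = sum_list (map (\<lambda>a. a ^ k) as)"
proof -
  obtain B P Q where sd: "schur_decomposition A as = (B,P,Q)"
    using prod_cases3 by blast
  from schur_decomposition[OF A c sd]
  have sim: "similar_mat_wit A B P Q" and uB: "upper_triangular B" and dB: "diag_mat B = as"
    by auto
  note sw = similar_mat_witD2[OF A sim]
  have B: "B \<in> carrier_mat n n" and P: "P \<in> carrier_mat n n" and Q: "Q \<in> carrier_mat n n"
    and QP: "Q * P = 1\<^sub>m n" using sw by blast+
  have Bk: "B ^\<^sub>m k \<in> carrier_mat n n" using B by auto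
  have "A ^\<^sub>m k = P * B ^\<^sub>m k * Q" by (rule similar_mat_wit_pow_id[OF sim])
  then have "mtr (A ^\<^sub>m k) = mtr (Q * (P * B ^\<^sub>m k))"
    using mtr_mult_comm[of "P * B ^\<^sub>m k" n n Q] P Bk Q by auto
  also have "Q * (P * B ^\<^sub>m k) = (Q * P) * B ^\<^sub>m k"
    using P Q Bk by (simp add: assoc_mult_mat)
  also have "\<dots> = B ^\<^sub>m k" using QP Bk by (metis left_mult_one_mat)
  also have "mtr (B ^\<^sub>m k) = (\<Sum>i<n. (B $$ (i,i)) ^ k)"
    unfolding mtr_def using ut_pow[OF B uB, of k] B by auto
  also have "\<dots> = sum_list (map (\<lambda>a. a ^ k) as)"
  proof -
    have "dim_row B = n" using B by auto
    then show ?thesis unfolding dB[symmetric] diag_mat_def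
      by (simp add: o_def sum.distinct_set_conv_list[symmetric] atLeast0LessThan)
  qed
  finally show ?thesis .
qed


lemma map_poly_of_real_mult:
  "map_poly (of_real :: real \<Rightarrow> complex) (p * q) = map_poly of_real p * map_poly of_real q"
proof -
  interpret map_poly_comm_ring_hom "of_real :: real \<Rightarrow> complex" ..
  show ?thesis by (rule hom_mult)
qed

lemma map_poly_of_real_linear_factors:
  "map_poly (of_real :: real \<Rightarrow> complex) (\<Prod>r\<leftarrow>rs. [:- r, 1:]) = (\<Prod>r\<leftarrow>rs. [:- of_real r, 1:])"
proof (induct rs)
  case Nil then show ?case by simp
next
  case (Cons r rs)
  have l: "map_poly (of_real :: real \<Rightarrow> complex) [:- r, 1:] = [:- of_real r, 1:]" by simp
  show ?case using Cons by (simp only: prod_list.Cons map_poly_of_real_mult l list.map)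
qed

lemma map_poly_of_real_inj:
  assumes "map_poly (of_real :: real \<Rightarrow> complex) p = map_poly of_real q"
  shows "p = q"
proof (rule poly_eqI)
  fix i
  have "coeff (map_poly (of_real :: real \<Rightarrow> complex) p) i = coeff (map_poly of_real q) i"
    using assms by simp
  then show "coeff p i = coeff q i" by (simp add: of_real_hom.coeff_map_poly_hom)
qed

lemma sym_eigenvalue_real:
  fixes M :: "real mat"
  assumes M: "M \<in> carrier_mat n n" and symM: "\<And>i j. i < n \<Longrightarrow> j < n \<Longrightarrow> M $$ (i,j) = M $$ (j,i)"
    and ev: "eigenvalue (map_mat of_real M) a"
  shows "Im a = 0"
proof -
  let ?Mc = "map_mat (of_real :: real \<Rightarrow> complex) M"
  from ev obtain u where u: "eigenvector ?Mc u a" unfolding eigenvalue_def by auto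
  then have uc: "u \<in> carrier_vec n" and u0: "u \<noteq> 0\<^sub>v n" and eq: "?Mc *\<^sub>v u = a \<cdot>\<^sub>v u"
    unfolding eigenvector_def using M by auto
  have row: "(\<Sum>j<n. of_real (M $$ (i,j)) * u $ j) = a * u $ i" if i: "i < n" for i
  proof -
    have "(?Mc *\<^sub>v u) $ i = (a \<cdot>\<^sub>v u) $ i" using eq by simp
    then show ?thesis using i M uc
      by (simp add: scalar_prod_def atLeast0LessThan)
  qed
  define f where "f i j = of_real (M $$ (i,j)) * u $ j * cnj (u $ i)" for i j
  define S where "S = (\<Sum>i<n. \<Sum>j<n. f i j)"
  define R where "R = (\<Sum>i<n. (cmod (u $ i))\<^sup>2)"
  have SR: "S = a * of_real R"
  proof -
    have "S = (\<Sum>i<n. (\<Sum>j<n. of_real (M $$ (i,j)) * u $ j) * cnj (u $ i))"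
      unfolding S_def f_def by (simp add: sum_distrib_right)
    also have "\<dots> = (\<Sum>i<n. a * (u $ i * cnj (u $ i)))"
      by (rule sum.cong, simp, subst row, auto)
    also have "\<dots> = a * of_real R"
    proof -
      have "\<And>z. z * cnj z = complex_of_real ((cmod z)\<^sup>2)" by (simp only: complex_norm_square)
      then show ?thesis unfolding R_def of_real_sum sum_distrib_left by presburger
    qed
    finally show ?thesis .
  qed
  have "cnj S = (\<Sum>i<n. \<Sum>j<n. f j i)"
    unfolding S_def f_def using symM by (auto intro!: sum.cong simp: mult.commute mult.left_commute)
  also have "\<dots> = S" unfolding S_def by (rule sum.swap)
  finally have cS: "cnj S = S" .
  then have imS: "Im S = 0" by (metis complex_cnj_cancel_iff Reals_cnj_iff complex_is_Real_iff)
  have "R > 0"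
  proof -
    obtain i where i: "i < n" "u $ i \<noteq> 0"
      using u0 uc by (metis carrier_vecD eq_vecI index_zero_vec(1) index_zero_vec(2))
    have "(cmod (u $ i))\<^sup>2 \<le> R" unfolding R_def
      by (rule member_le_sum) (use i in auto)
    moreover have "(cmod (u $ i))\<^sup>2 > 0" using i by simp
    ultimately show ?thesis by linarith
  qed
  have "Im S = Im a * R" using SR by simp
  then show ?thesis using imS \<open>R > 0\<close> by simp
qed

lemma of_real_sum_list': "(of_real (sum_list xs) :: complex) = sum_list (map of_real xs)"
  by (induct xs) auto

lemma sym_real_factorized:
  fixes M :: "real mat"
  assumes M: "M \<in> carrier_mat n n" and symM: "\<And>i j. i < n \<Longrightarrow> j < n \<Longrightarrow> M $$ (i,j) = M $$ (j,i)"
  shows "\<exists>rs. length rs = n \<and> char_poly M = (\<Prod>r\<leftarrow>rs. [:- r, 1:]) \<and>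
            (\<forall>k. mtr (M ^\<^sub>m k) = sum_list (map (\<lambda>r. r ^ k) rs))"
proof -
  let ?Mc = "map_mat (of_real :: real \<Rightarrow> complex) M"
  have Mc: "?Mc \<in> carrier_mat n n" using M by auto
  from char_poly_factorized[OF Mc] obtain as where
    cas: "char_poly ?Mc = (\<Prod>a\<leftarrow>as. [:- a, 1:])" and las: "length as = n" by auto
  have real: "of_real (Re a) = a" if a: "a \<in> set as" for a
  proof -
    have "poly (char_poly ?Mc) a = 0" unfolding cas using a by (rule linear_poly_root)
    then have "eigenvalue ?Mc a" using eigenvalue_root_char_poly[OF Mc] by simp
    then have "Im a = 0" using sym_eigenvalue_real[OF M symM] by blast
    then show ?thesis by (simp add: complex_eq_iff)
  qed
  define rs where "rs = map Re as"
  have asrs: "as = map of_real rs" unfolding rs_def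
    by (simp add: o_def, rule sym, rule map_idI, rule real)
  have "map_poly of_real (char_poly M) = char_poly ?Mc"
    by (rule of_real_hom.char_poly_hom[OF M, symmetric])
  also have "\<dots> = map_poly of_real (\<Prod>r\<leftarrow>rs. [:- r, 1:])"
    unfolding cas asrs map_poly_of_real_linear_factors by (simp add: o_def)
  finally have cp: "char_poly M = (\<Prod>r\<leftarrow>rs. [:- r, 1:])" by (rule map_poly_of_real_inj)
  have tr: "mtr (M ^\<^sub>m k) = sum_list (map (\<lambda>r. r ^ k) rs)" for k
  proof -
    have e: "?Mc ^\<^sub>m k = map_mat complex_of_real (M ^\<^sub>m k)"
      by (rule of_real_hom.mat_hom_pow[OF M, symmetric])
    have "of_real (mtr (M ^\<^sub>m k)) = mtr (?Mc ^\<^sub>m k)"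
      unfolding e mtr_def using M by (auto simp: of_real_sum intro!: sum.cong)
    also have "\<dots> = sum_list (map (\<lambda>a. a ^ k) as)" by (rule mtr_pow_factorized[OF Mc cas])
    also have "\<dots> = of_real (sum_list (map (\<lambda>r. r ^ k) rs))"
      unfolding asrs by (simp add: o_def of_real_sum_list')
    finally show ?thesis by (simp only: of_real_eq_iff)
  qed
  have "length rs = n" using las unfolding rs_def by simp
  then show ?thesis using cp tr by blast
qed


lemma cs_sum:
  fixes f g :: "'a \<Rightarrow> real"
  assumes "finite A"
  shows "(\<Sum>i\<in>A. f i * g i)\<^sup>2 \<le> (\<Sum>i\<in>A. (f i)\<^sup>2) * (\<Sum>i\<in>A. (g i)\<^sup>2)"
proof -
  define a where "a = (\<Sum>i\<in>A. (f i)\<^sup>2)"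
  define b where "b = (\<Sum>i\<in>A. f i * g i)"
  define c where "c = (\<Sum>i\<in>A. (g i)\<^sup>2)"
  have c0: "c \<ge> 0" unfolding c_def by (simp add: sum_nonneg)
  show ?thesis
  proof (cases "c = 0")
    case True
    then have "\<forall>i\<in>A. (g i)\<^sup>2 = 0" unfolding c_def using assms
      by (subst (asm) sum_nonneg_eq_0_iff) auto
    then have "b = 0" unfolding b_def by simp
    then show ?thesis using True by (simp add: b_def[symmetric] c_def[symmetric])
  next
    case False
    then have cpos: "c > 0" using c0 by simp
    have "0 \<le> (\<Sum>i\<in>A. (c * f i - b * g i)\<^sup>2)" by (simp add: sum_nonneg)
    also have "\<dots> = (\<Sum>i\<in>A. c\<^sup>2 * (f i)\<^sup>2 - 2*c*b*(f i*g i) + b\<^sup>2 * (g i)\<^sup>2)"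
      by (rule sum.cong) (simp_all add: power2_eq_square algebra_simps)
    also have "\<dots> = c\<^sup>2 * a - 2 * c * b * b + b\<^sup>2 * c"
      by (simp add: sum.distrib sum_subtractf sum_distrib_left a_def b_def c_def)
    also have "\<dots> = c * (a * c - b\<^sup>2)" by (simp add: power2_eq_square algebra_simps)
    finally have "0 \<le> a * c - b\<^sup>2" using cpos by (simp add: zero_le_mult_iff)
    then show ?thesis by (simp add: a_def b_def c_def)
  qed
qed

lemma sprod_sum: "v \<in> carrier_vec n \<Longrightarrow> w \<in> carrier_vec n \<Longrightarrow> v \<bullet> w = (\<Sum>i<n. v $ i * w $ i)"
  by (simp add: scalar_prod_def atLeast0LessThan)

lemma sprod_self: "(v :: real vec) \<in> carrier_vec n \<Longrightarrow> v \<bullet> v = (\<Sum>i<n. (v $ i)\<^sup>2)"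
  by (simp add: sprod_sum power2_eq_square)

lemma sprod_self_ge0: "(v :: real vec) \<in> carrier_vec n \<Longrightarrow> v \<bullet> v \<ge> 0"
  by (simp add: sprod_self sum_nonneg)

lemma cs_vec:
  fixes x y :: "real vec"
  assumes "x \<in> carrier_vec n" "y \<in> carrier_vec n"
  shows "(x \<bullet> y)\<^sup>2 \<le> (x \<bullet> x) * (y \<bullet> y)"
  using cs_sum[of "{..<n}" "\<lambda>i. x $ i" "\<lambda>i. y $ i"] assms
  by (simp add: sprod_sum power2_eq_square)

lemma pow_mat_add:
  assumes M: "M \<in> carrier_mat n n"
  shows "M ^\<^sub>m (a + b) = M ^\<^sub>m a * M ^\<^sub>m b"
proof (induct b)
  case 0
  then show ?case using M by simp
next
  case (Suc b)
  have "M ^\<^sub>m (a + Suc b) = M ^\<^sub>m (a + b) * M" by simp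
  also have "\<dots> = (M ^\<^sub>m a * M ^\<^sub>m b) * M" using Suc by simp
  also have "\<dots> = M ^\<^sub>m a * (M ^\<^sub>m b * M)"
    by (rule assoc_mult_mat[of _ n n _ n _ n]) (use M in auto)
  finally show ?case by simp
qed

lemma pow_mat_comm:
  assumes M: "M \<in> carrier_mat n n"
  shows "M ^\<^sub>m k * M = M * M ^\<^sub>m k"
proof -
  have one: "M ^\<^sub>m 1 = M" using M by simp
  have "M ^\<^sub>m k * M = M ^\<^sub>m (k + 1)" using pow_mat_add[OF M, of k 1] one by simp
  also have "\<dots> = M ^\<^sub>m (1 + k)" by simp
  also have "\<dots> = M * M ^\<^sub>m k" using pow_mat_add[OF M, of 1 k] one by simp
  finally show ?thesis .
qed

lemma pow_mat_transpose:
  fixes M :: "'a::comm_ring_1 mat"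
  assumes M: "M \<in> carrier_mat n n" and sM: "transpose_mat M = M"
  shows "transpose_mat (M ^\<^sub>m k) = M ^\<^sub>m k"
proof (induct k)
  case 0
  then show ?case using M by simp
next
  case (Suc k)
  have "transpose_mat (M ^\<^sub>m Suc k) = transpose_mat M * transpose_mat (M ^\<^sub>m k)"
    using transpose_mult[of "M ^\<^sub>m k" n n M n] M by simp
  also have "\<dots> = M * M ^\<^sub>m k" using Suc sM by simp
  also have "\<dots> = M ^\<^sub>m Suc k" using pow_mat_comm[OF M] by simp
  finally show ?case .
qed

lemma pow_mat_ones:
  assumes M: "M \<in> carrier_mat n n" and M1: "M *\<^sub>v vec n (\<lambda>_. 1) = vec n (\<lambda>_. 1)"
  shows "M ^\<^sub>m k *\<^sub>v vec n (\<lambda>_. 1) = vec n (\<lambda>_. 1)"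
proof (induct k)
  case 0
  then show ?case using M by simp
next
  case (Suc k)
  have "M ^\<^sub>m Suc k *\<^sub>v vec n (\<lambda>_. 1) = M ^\<^sub>m k *\<^sub>v (M *\<^sub>v vec n (\<lambda>_. 1))"
    using M by (simp add: assoc_mult_mat_vec[of _ n n _ n])
  then show ?case using M1 Suc by simp
qed


definition ones :: "nat \<Rightarrow> real vec" where "ones n = vec n (\<lambda>_. 1)"

lemma ones_carrier[simp]: "ones n \<in> carrier_vec n" unfolding ones_def by simp

lemma sprod_ones: "v \<in> carrier_vec n \<Longrightarrow> v \<bullet> ones n = (\<Sum>i<n. v $ i)"
  unfolding ones_def by (simp add: sprod_sum)

lemma sprod_self_pos: "(u :: real vec) \<in> carrier_vec n \<Longrightarrow> u \<noteq> 0\<^sub>v n \<Longrightarrow> u \<bullet> u > 0"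
proof -
  assume u: "u \<in> carrier_vec n" and u0: "u \<noteq> 0\<^sub>v n"
  obtain i where i: "i < n" "u $ i \<noteq> 0"
    using u0 u by (metis carrier_vecD eq_vecI index_zero_vec(1) index_zero_vec(2))
  have "(u $ i)\<^sup>2 \<le> (\<Sum>j<n. (u $ j)\<^sup>2)" by (rule member_le_sum) (use i in auto)
  moreover have "(u $ i)\<^sup>2 > 0" using i by simp
  ultimately show ?thesis using sprod_self[OF u] by linarith
qed

locale dstoch =
  fixes W :: "real mat" and n :: nat
  assumes W: "W \<in> carrier_mat n n"
    and rows: "\<forall>i<n. (\<Sum>j<n. W $$ (i,j)) = 1"
    and cols: "\<forall>j<n. (\<Sum>i<n. W $$ (i,j)) = 1"
begin

definition "M = transpose_mat W * W"

lemma M: "M \<in> carrier_mat n n" unfolding M_def using W by auto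

lemma M_sym: "transpose_mat M = M"
  unfolding M_def using W by (simp add: transpose_mult[of _ n n W n])

lemma M_sym_entry: "i < n \<Longrightarrow> j < n \<Longrightarrow> M $$ (i,j) = M $$ (j,i)"
  using M_sym M by (metis carrier_matD(1) carrier_matD(2) index_transpose_mat(1))

lemma W_ones: "W *\<^sub>v ones n = ones n"
  by (rule eq_vecI) (use W rows in \<open>auto simp: ones_def scalar_prod_def atLeast0LessThan\<close>)

lemma WT_ones: "transpose_mat W *\<^sub>v ones n = ones n"
  by (rule eq_vecI) (use W cols in \<open>auto simp: ones_def scalar_prod_def atLeast0LessThan\<close>)

lemma M_ones: "M *\<^sub>v ones n = ones n"
  unfolding M_def using W by (simp add: assoc_mult_mat_vec[of _ n n _ n] W_ones WT_ones)

lemma quad_M: "u \<in> carrier_vec n \<Longrightarrow> u \<bullet> (M *\<^sub>v u) = (W *\<^sub>v u) \<bullet> (W *\<^sub>v u)"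
proof -
  assume u: "u \<in> carrier_vec n"
  have e: "M *\<^sub>v u = transpose_mat W *\<^sub>v (W *\<^sub>v u)"
    unfolding M_def using W u by (simp add: assoc_mult_mat_vec[of _ n n _ n])
  have "u \<bullet> (M *\<^sub>v u) = (M *\<^sub>v u) \<bullet> u" using u M by (simp add: comm_scalar_prod[of _ n])
  also have "\<dots> = (transpose_mat W *\<^sub>v (W *\<^sub>v u)) \<bullet> u" using e by simp
  also have "(transpose_mat W *\<^sub>v (W *\<^sub>v u)) \<bullet> u = (W *\<^sub>v u) \<bullet> (W *\<^sub>v u)"
    by (rule transpose_vec_mult_scalar[OF W u]) (use W u in auto)
  finally show ?thesis .
qed

lemma eig_nonneg:
  assumes "poly (char_poly M) r = 0"
  shows "r \<ge> 0"
proof -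
  have "eigenvalue M r" using eigenvalue_root_char_poly[OF M] assms by simp
  then obtain u where "eigenvector M u r" unfolding eigenvalue_def by auto
  then have u: "u \<in> carrier_vec n" and u0: "u \<noteq> 0\<^sub>v n" and eq: "M *\<^sub>v u = r \<cdot>\<^sub>v u"
    unfolding eigenvector_def using M by auto
  have "r * (u \<bullet> u) = u \<bullet> (M *\<^sub>v u)" using eq u by simp
  also have "\<dots> \<ge> 0" using quad_M[OF u] sprod_self_ge0[of "W *\<^sub>v u" n] W u by simp
  finally show ?thesis using sprod_self_pos[OF u u0] by (simp add: zero_le_mult_iff)
qed

lemma one_root:
  assumes n: "n > 0"
  shows "poly (char_poly M) 1 = 0"
proof -
  have "eigenvector M (ones n) 1"
    unfolding eigenvector_def using M M_ones n
    by (auto simp: ones_def) (metis index_vec index_zero_vec(1) one_neq_zero)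
  then have "eigenvalue M 1" unfolding eigenvalue_def by auto
  then show ?thesis using eigenvalue_root_char_poly[OF M] by simp
qed

end


lemma proots_linear_factors: "proots (\<Prod>r\<leftarrow>rs. [:- r, 1:]) = mset (rs :: real list)"
proof (induct rs)
  case Nil then show ?case by simp
next
  case (Cons r rs)
  have "0 \<notin> set (map (\<lambda>r. [:- r, 1:]) rs :: real poly list)" by auto
  then have nz: "(\<Prod>r\<leftarrow>rs. [:- r, 1:]) \<noteq> (0 :: real poly)"
    by (metis prod_list_zero_iff)
  have "proots (\<Prod>r\<leftarrow>r # rs. [:- r, 1:]) = proots [:- r, 1:] + proots (\<Prod>r\<leftarrow>rs. [:- r, 1:])"
    using nz by (simp add: proots_mult del: mult_pCons_left)
  then show ?case using Cons by (simp add: proots_linear_factor)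
qed

lemma rev_sort_le1:
  fixes xs :: "real list"
  defines "l \<equiv> rev (sort xs)"
  assumes j: "1 \<le> j" "j < length l"
  shows "l ! j \<le> l ! 1"
proof -
  let ?s = "sort xs"
  have len: "length ?s = length l" unfolding l_def by simp
  have ll: "length l = length xs" unfolding l_def by simp
  have "l ! j = ?s ! (length l - Suc j)" unfolding l_def using j ll by (simp add: rev_nth)
  also have "\<dots> \<le> ?s ! (length l - Suc 1)"
    by (rule sorted_nth_mono) (use j len in auto)
  also have "\<dots> = l ! 1" unfolding l_def using j ll by (simp add: rev_nth)
  finally show ?thesis .
qed

lemma two_big:
  fixes xs ys :: "real list"
  defines "l \<equiv> rev (sort xs)"
  assumes len: "length xs \<ge> 2" and ms: "mset xs = add_mset a (mset ys)" and y: "y \<in> set ys"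
    and a: "a > l ! 1" and yb: "y > l ! 1"
  shows False
proof -
  let ?P = "\<lambda>z. z > l ! 1"
  have "mset l = mset xs" unfolding l_def by simp
  then have "size (filter_mset ?P (mset xs)) = length (filter ?P l)"
    by (metis mset_filter size_mset)
  also have "length (filter ?P l) \<le> 1"
  proof -
    have "filter ?P (drop 1 l) = []"
    proof (rule filter_False, rule ballI)
      fix z assume "z \<in> set (drop 1 l)"
      then obtain j where j: "j < length (drop 1 l)" and z: "z = drop 1 l ! j"
        by (auto simp: in_set_conv_nth)
      have "z = l ! (1 + j)" using z j by simp
      also have "\<dots> \<le> l ! 1" unfolding l_def by (rule rev_sort_le1) (use j l_def in auto)
      finally show "\<not> ?P z" by simp
    qed
    then have "filter ?P l = filter ?P (take 1 l)"
      by (metis append.right_neutral append_take_drop_id filter_append)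
    also have "length \<dots> \<le> 1" by (metis length_filter_le length_take min.bounded_iff nle_le)
    finally show ?thesis by simp
  qed
  finally have le1: "size (filter_mset ?P (mset xs)) \<le> 1" .
  have "y \<in># filter_mset ?P (mset ys)" using y yb by simp
  then have "size (filter_mset ?P (mset ys)) \<ge> 1"
    by (metis One_nat_def Suc_leI size_eq_0_iff_empty empty_iff neq0_conv set_mset_empty)
  moreover have "filter_mset ?P (mset xs) = add_mset a (filter_mset ?P (mset ys))"
    using ms a by simp
  ultimately have "size (filter_mset ?P (mset xs)) \<ge> 2" by simp
  then show False using le1 by simp
qed

context dstoch begin

lemma sv_structure:
  assumes n: "n > 0" and s1: "second_singular_value W < 1" and lrs: "length rs = n" and cp: "char_poly M = (\<Prod>r\<leftarrow>rs. [:- r, 1:])"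
  shows "0 \<le> second_singular_value W \<and>
    (\<exists>rs'. mset rs = add_mset 1 (mset rs') \<and> length rs' = n - 1 \<and>
       (\<forall>r\<in>set rs'. 0 \<le> r \<and> r \<le> (second_singular_value W)\<^sup>2))"
proof -
  define \<sigma> where "\<sigma> = second_singular_value W"
  have nonneg: "r \<ge> 0" if "r \<in> set rs" for r
    using eig_nonneg[of r] linear_poly_root[OF that] cp by simp
  have "poly (\<Prod>r\<leftarrow>rs. [:- r, 1:]) 1 = 0" using one_root[OF n] cp by simp
  then obtain r where r: "r \<in> set rs" "poly [:- r, 1:] 1 = 0"
    unfolding poly_prod_list_zero_iff by auto
  then have one: "1 \<in> set rs" by simp
  define rs' where "rs' = remove1 1 rs"
  have ms: "mset rs = add_mset 1 (mset rs')" unfolding rs'_def using one by simp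
  have lrs': "length rs' = n - 1" unfolding rs'_def using one lrs by (simp add: length_remove1)
  have sub: "set rs' \<subseteq> set rs" unfolding rs'_def by (rule set_remove1_subset)
  have sv: "singular_values W = mset (map sqrt rs)"
    unfolding singular_values_def M_def[symmetric] cp proots_linear_factors by simp
  define l where "l = rev (sort (map sqrt rs))"
  have ssv: "\<sigma> = (if length l \<ge> 2 then l ! 1 else 0)"
    unfolding \<sigma>_def second_singular_value_def sv sorted_list_of_multiset_mset l_def Let_def
    by simp
  show ?thesis
  proof (cases "n \<ge> 2")
    case False
    then have "n = 1" using n by simp
    then have "rs' = []" using lrs' by simp
    moreover have "\<sigma> = 0" using ssv False lrs unfolding l_def by simp
    ultimately show ?thesis using ms lrs' unfolding \<sigma>_def by auto
  next
    case True
    then have s: "\<sigma> = l ! 1" using ssv lrs unfolding l_def by simp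
    have "1 < length l" using True lrs unfolding l_def by simp
    then have "l ! 1 \<in> set l" by (rule nth_mem)
    then have "l ! 1 \<in> sqrt ` set rs" unfolding l_def by simp
    then have s0: "\<sigma> \<ge> 0" using s nonneg unfolding l_def by auto
    have "r \<le> \<sigma>\<^sup>2" if r: "r \<in> set rs'" for r
    proof -
      have r0: "r \<ge> 0" using nonneg sub r by auto
      have "sqrt r \<le> \<sigma>"
      proof (rule ccontr)
        assume "\<not> sqrt r \<le> \<sigma>"
        then have big: "sqrt r > l ! 1" using s by simp
        have ms': "mset (map sqrt rs) = add_mset 1 (mset (map sqrt rs'))" using ms
          by (metis image_mset_add_mset mset_map real_sqrt_one)
        have s1: "1 > l ! 1"
        proof -
          have "\<sigma> < 1" using s1 unfolding \<sigma>_def .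
          then show ?thesis using s by simp
        qed
        show False
          by (rule two_big[of "map sqrt rs" 1 "map sqrt rs'" "sqrt r", folded l_def])
             (use True lrs ms' r big s1 in auto)
      qed
      then have "(sqrt r)\<^sup>2 \<le> \<sigma>\<^sup>2" by (rule power_mono) (use r0 in simp)
      then show ?thesis using r0 by simp
    qed
    then show ?thesis using ms lrs' s0 sub nonneg unfolding \<sigma>_def by auto
  qed
qed

end


lemma sum_list_map_le:
  fixes f :: "'a \<Rightarrow> real"
  assumes "\<forall>x\<in>set xs. f x \<le> c"
  shows "sum_list (map f xs) \<le> real (length xs) * c"
  using assms by (induct xs) (auto simp: algebra_simps)

context dstoch begin

lemma Mpow: "M ^\<^sub>m k \<in> carrier_mat n n" using M by simp

lemma Mpow_sym: "transpose_mat (M ^\<^sub>m k) = M ^\<^sub>m k"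
  by (rule pow_mat_transpose[OF M M_sym])

lemma Mpow_rows: "i < n \<Longrightarrow> (\<Sum>j<n. (M ^\<^sub>m k) $$ (i,j)) = 1"
proof -
  assume i: "i < n"
  have "(M ^\<^sub>m k *\<^sub>v ones n) $ i = ones n $ i"
    using pow_mat_ones[OF M, of k] M_ones unfolding ones_def by simp
  then show ?thesis using i M by (simp add: ones_def scalar_prod_def atLeast0LessThan)
qed

lemma Mpow_quad:
  assumes v: "v \<in> carrier_vec n"
  shows "(M ^\<^sub>m k *\<^sub>v v) \<bullet> (M ^\<^sub>m k *\<^sub>v v) = v \<bullet> (M ^\<^sub>m (k + k) *\<^sub>v v)"
proof -
  let ?P = "M ^\<^sub>m k"
  have P: "?P \<in> carrier_mat n n" by (rule Mpow)
  have "(M ^\<^sub>m k *\<^sub>v v) \<bullet> (M ^\<^sub>m k *\<^sub>v v) = (transpose_mat ?P *\<^sub>v (?P *\<^sub>v v)) \<bullet> v"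
    by (rule transpose_vec_mult_scalar[OF P v, symmetric]) (use P v in auto)
  also have "transpose_mat ?P *\<^sub>v (?P *\<^sub>v v) = (?P * ?P) *\<^sub>v v"
    unfolding Mpow_sym using P v by (simp add: assoc_mult_mat_vec[of _ n n _ n])
  also have "?P * ?P = M ^\<^sub>m (k + k)" using pow_mat_add[OF M, of k k] by simp
  also have "(M ^\<^sub>m (k + k) *\<^sub>v v) \<bullet> v = v \<bullet> (M ^\<^sub>m (k + k) *\<^sub>v v)"
    by (rule comm_scalar_prod[of _ n]) (use v mult_mat_vec_carrier[OF Mpow v] in auto)
  finally show ?thesis .
qed

lemma pow_decay:
  assumes n: "n > 0" and v: "v \<in> carrier_vec n" and s0: "(\<Sum>i<n. v $ i) = 0"
  shows "(M ^\<^sub>m k *\<^sub>v v) \<bullet> (M ^\<^sub>m k *\<^sub>v v) \<le> (mtr (M ^\<^sub>m (k + k)) - 1) * (v \<bullet> v)"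
proof -
  define A where "A = M ^\<^sub>m k"
  have A: "A \<in> carrier_mat n n" unfolding A_def by (rule Mpow)
  have Asym: "A $$ (i,j) = A $$ (j,i)" if "i < n" "j < n" for i j
    using Mpow_sym[of k] A that unfolding A_def[symmetric]
    by (metis carrier_matD(1) carrier_matD(2) index_transpose_mat(1))
  have Arow: "(\<Sum>j<n. A $$ (i,j)) = 1" if "i < n" for i unfolding A_def by (rule Mpow_rows[OF that])
  define c where "c = 1 / real n"
  have Av: "(A *\<^sub>v v) $ i = (\<Sum>j<n. (A $$ (i,j) - c) * v $ j)" if i: "i < n" for i
  proof -
    have "(A *\<^sub>v v) $ i = (\<Sum>j<n. A $$ (i,j) * v $ j)"
      using A v i by (simp add: scalar_prod_def atLeast0LessThan)
    also have "\<dots> = (\<Sum>j<n. (A $$ (i,j) - c) * v $ j) + c * (\<Sum>j<n. v $ j)"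
      by (simp add: algebra_simps sum_distrib_left sum_subtractf)
    finally show ?thesis using s0 by simp
  qed
  have "(A *\<^sub>v v) \<bullet> (A *\<^sub>v v) = (\<Sum>i<n. ((A *\<^sub>v v) $ i)\<^sup>2)"
    by (rule sprod_self) (use A v in auto)
  also have "\<dots> \<le> (\<Sum>i<n. (\<Sum>j<n. (A $$ (i,j) - c)\<^sup>2) * (\<Sum>j<n. (v $ j)\<^sup>2))"
    by (rule sum_mono) (simp add: Av cs_sum)
  also have "\<dots> = (\<Sum>i<n. \<Sum>j<n. (A $$ (i,j) - c)\<^sup>2) * (v \<bullet> v)"
    by (simp add: sum_distrib_right sprod_self[OF v])
  also have "(\<Sum>i<n. \<Sum>j<n. (A $$ (i,j) - c)\<^sup>2) = mtr (M ^\<^sub>m (k + k)) - 1"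
  proof -
    have "(\<Sum>i<n. \<Sum>j<n. (A $$ (i,j) - c)\<^sup>2)
        = (\<Sum>i<n. (\<Sum>j<n. A $$ (i,j) * A $$ (j,i)) - 2 * c * (\<Sum>j<n. A $$ (i,j)) + real n * c\<^sup>2)"
    proof (rule sum.cong[OF refl])
      fix i assume i: "i \<in> {..<n}"
      have "(\<Sum>j<n. (A $$ (i,j) - c)\<^sup>2) = (\<Sum>j<n. A $$ (i,j) * A $$ (j,i) - 2 * c * A $$ (i,j) + c\<^sup>2)"
        by (rule sum.cong[OF refl]) (use i Asym in \<open>auto simp: power2_eq_square algebra_simps\<close>)
      also have "\<dots> = (\<Sum>j<n. A $$ (i,j) * A $$ (j,i)) - 2 * c * (\<Sum>j<n. A $$ (i,j)) + real n * c\<^sup>2"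
        by (simp add: sum.distrib sum_subtractf sum_distrib_left)
      finally show "(\<Sum>j<n. (A $$ (i,j) - c)\<^sup>2) = \<dots>" .
    qed
    also have "\<dots> = (\<Sum>i<n. (\<Sum>j<n. A $$ (i,j) * A $$ (j,i)) - 2 * c + real n * c\<^sup>2)"
      using Arow by (intro sum.cong) auto
    also have "\<dots> = (\<Sum>i<n. \<Sum>j<n. A $$ (i,j) * A $$ (j,i)) - 2 * c * real n + real n * real n * c\<^sup>2"
      by (simp add: sum.distrib sum_subtractf)
    also have "2 * c * real n = 2" using n unfolding c_def by simp
    also have "real n * real n * c\<^sup>2 = 1" using n unfolding c_def by (simp add: power2_eq_square)
    also have "(\<Sum>i<n. \<Sum>j<n. A $$ (i,j) * A $$ (j,i)) - 2 + 1 = mtr (M ^\<^sub>m (k + k)) - 1"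
    proof -
      have "(\<Sum>i<n. \<Sum>j<n. A $$ (i,j) * A $$ (j,i)) = mtr (A * A)"
        unfolding mtr_def using A by (auto simp: scalar_prod_def atLeast0LessThan intro!: sum.cong)
      moreover have "A * A = M ^\<^sub>m (k + k)" unfolding A_def using pow_mat_add[OF M, of k k] by simp
      ultimately show ?thesis by simp
    qed
    finally show ?thesis .
  qed
  finally show ?thesis unfolding A_def .
qed

end


lemma grow_contra:
  fixes q b V :: real
  assumes b0: "b \<ge> 0" and q0: "q \<ge> 0"
    and bound: "\<And>j. q ^ (2 ^ Suc j) \<le> C * b ^ (2 ^ Suc j)"
  shows "q \<le> b"
proof (rule ccontr)
  assume "\<not> q \<le> b"
  then have qb: "q > b" by simp
  show False
  proof (cases "b = 0")
    case True
    have "q ^ 2 \<le> C * b ^ 2" using bound[of 0] by simp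
    then have "q ^ 2 \<le> 0" using True by simp
    then have "q * q \<le> 0" by (simp add: power2_eq_square)
    moreover have "q * q > 0" using qb True by simp
    ultimately show False by linarith
  next
    case False
    then have bp: "b > 0" using b0 by simp
    define x where "x = q / b - 1"
    have xp: "x > 0" using qb bp unfolding x_def by (simp add: field_simps)
    obtain j where j: "(\<bar>C\<bar> + 1) / x < 2 ^ j" using real_arch_pow[of 2 "(\<bar>C\<bar> + 1) / x"] by auto
    define K where "K = (2::nat) ^ Suc j"
    have "real K = 2 * 2 ^ j" unfolding K_def by simp
    then have Kx: "real K * x > \<bar>C\<bar> + 1" using j xp by (simp add: field_simps)
    have "1 + real K * x \<le> (1 + x) ^ K" by (rule Bernoulli_inequality) (use xp in simp)
    also have "(1 + x) = q / b" unfolding x_def by simp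
    also have "(q / b) ^ K = q ^ K / b ^ K" by (simp add: power_divide)
    also have "\<dots> \<le> C" using bound[of j] bp unfolding K_def by (simp add: divide_le_eq)
    finally show False using Kx by linarith
  qed
qed

lemma pow_pred: "0 < m \<Longrightarrow> (V::real) ^ (m - 1) * V = V ^ m"
  by (cases m) auto

context dstoch begin

theorem spectral_gap:
  assumes s1: "second_singular_value W < 1"
  shows "0 \<le> second_singular_value W \<and>
    (\<forall>v\<in>carrier_vec n. (\<Sum>i<n. v $ i) = 0 \<longrightarrow>
       (W *\<^sub>v v) \<bullet> (W *\<^sub>v v) \<le> (second_singular_value W)\<^sup>2 * (v \<bullet> v))"
proof (cases "n = 0")
  case True
  have "singular_values W = {#}"
  proof -
    have "char_poly M = 1" using M True by (simp add: char_poly_defs det_def)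
    then show ?thesis unfolding singular_values_def M_def by simp
  qed
  then have "second_singular_value W = 0" unfolding second_singular_value_def by simp
  moreover have "\<forall>v\<in>carrier_vec n. (W *\<^sub>v v) \<bullet> (W *\<^sub>v v) = 0"
    using True W by (simp add: scalar_prod_def)
  ultimately show ?thesis using True by (simp add: scalar_prod_def)
next
  case False
  then have n: "n > 0" by simp
  define \<sigma> where "\<sigma> = second_singular_value W"
  obtain rs where lrs: "length rs = n" and cp: "char_poly M = (\<Prod>r\<leftarrow>rs. [:- r, 1:])"
    and tr: "\<And>k. mtr (M ^\<^sub>m k) = sum_list (map (\<lambda>r. r ^ k) rs)"
    using sym_real_factorized[OF M M_sym_entry] by blast
  from sv_structure[OF n s1 lrs cp] obtain rs' where s0: "0 \<le> \<sigma>"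
    and ms: "mset rs = add_mset 1 (mset rs')" and lrs': "length rs' = n - 1"
    and rb: "\<forall>r\<in>set rs'. 0 \<le> r \<and> r \<le> \<sigma>\<^sup>2" unfolding \<sigma>_def by blast
  have trb: "mtr (M ^\<^sub>m k) - 1 \<le> real (n - 1) * (\<sigma>\<^sup>2) ^ k" for k
  proof -
    have "sum_list (map (\<lambda>r. r ^ k) rs) = sum_mset (image_mset (\<lambda>r. r ^ k) (mset rs))"
      by (metis mset_map sum_mset_sum_list)
    also have "\<dots> = 1 + sum_list (map (\<lambda>r. r ^ k) rs')"
      unfolding ms by (simp add: sum_mset_sum_list[symmetric])
    finally have "mtr (M ^\<^sub>m k) - 1 = sum_list (map (\<lambda>r. r ^ k) rs')" using tr by simp
    also have "\<dots> \<le> real (length rs') * (\<sigma>\<^sup>2) ^ k"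
      by (rule sum_list_map_le) (use rb in \<open>auto intro: power_mono\<close>)
    finally show ?thesis using lrs' by simp
  qed
  have main: "(W *\<^sub>v v) \<bullet> (W *\<^sub>v v) \<le> \<sigma>\<^sup>2 * (v \<bullet> v)"
    if v: "v \<in> carrier_vec n" and sv0: "(\<Sum>i<n. v $ i) = 0" for v
  proof -
    define t where "t j = v \<bullet> (M ^\<^sub>m (2 ^ j) *\<^sub>v v)" for j :: nat
    define V where "V = v \<bullet> v"
    have V0: "V \<ge> 0" unfolding V_def by (rule sprod_self_ge0[OF v])
    have M1: "M ^\<^sub>m 1 = M" using M by simp
    have t0: "t 0 = (W *\<^sub>v v) \<bullet> (W *\<^sub>v v)" unfolding t_def using quad_M[OF v] M1 by simp
    have t00: "t 0 \<ge> 0" unfolding t0 by (rule sprod_self_ge0[of _ n]) (use W v in auto)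
    have tS: "t (Suc j) = (M ^\<^sub>m (2 ^ j) *\<^sub>v v) \<bullet> (M ^\<^sub>m (2 ^ j) *\<^sub>v v)" for j
      unfolding t_def using Mpow_quad[OF v, of "2 ^ j"] by (simp add: mult_2)
    have tS0: "t (Suc j) \<ge> 0" for j unfolding tS by (rule sprod_self_ge0[of _ n]) (use mult_mat_vec_carrier[OF Mpow v] in auto)
    have tSb: "t (Suc j) \<le> real (n - 1) * (\<sigma>\<^sup>2) ^ (2 ^ Suc j) * V" for j
    proof -
      have "t (Suc j) \<le> (mtr (M ^\<^sub>m (2 ^ j + 2 ^ j)) - 1) * V"
        unfolding tS V_def by (rule pow_decay[OF n v sv0])
      also have "\<dots> \<le> real (n - 1) * (\<sigma>\<^sup>2) ^ (2 ^ j + 2 ^ j) * V"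
        by (rule mult_right_mono[OF trb V0])
      finally show ?thesis by (simp add: mult_2)
    qed
    have cs: "(t j)\<^sup>2 \<le> V * t (Suc j)" for j
    proof -
      have "(t j)\<^sup>2 \<le> (v \<bullet> v) * ((M ^\<^sub>m (2 ^ j) *\<^sub>v v) \<bullet> (M ^\<^sub>m (2 ^ j) *\<^sub>v v))"
        unfolding t_def by (rule cs_vec) (use v mult_mat_vec_carrier[OF Mpow v] in auto)
      then show ?thesis unfolding tS V_def .
    qed
    have ind: "t 0 ^ (2 ^ j) \<le> V ^ (2 ^ j - 1) * t j" for j
    proof (induct j)
      case 0 then show ?case by simp
    next
      case (Suc j)
      have "t 0 ^ (2 ^ Suc j) = (t 0 ^ (2 ^ j))\<^sup>2" by (simp add: power_mult[symmetric] mult.commute)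
      also have "\<dots> \<le> (V ^ (2 ^ j - 1) * t j)\<^sup>2"
        by (rule power_mono[OF Suc]) (use t00 in simp)
      also have "\<dots> = V ^ (2 * (2 ^ j - 1)) * (t j)\<^sup>2"
        by (simp add: power_mult_distrib power_mult[symmetric] mult.commute)
      also have "\<dots> \<le> V ^ (2 * (2 ^ j - 1)) * (V * t (Suc j))"
        by (rule mult_left_mono[OF cs]) (use V0 in simp)
      also have "\<dots> = V ^ (2 ^ Suc j - 1) * t (Suc j)"
      proof -
        have g: "\<forall>x::nat. x > 0 \<longrightarrow> 2 * (x - 1) + 1 = 2 * x - 1" by arith
        have "2 * (2 ^ j - 1) + 1 = (2::nat) ^ Suc j - 1"
          using g[rule_format, of "2 ^ j"] by simp
        then show ?thesis by (metis mult.assoc power_Suc2 Suc_eq_plus1)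
      qed
      finally show ?case .
    qed
    have "t 0 \<le> \<sigma>\<^sup>2 * V"
    proof (rule grow_contra[where C = "real (n - 1)"])
      show "0 \<le> \<sigma>\<^sup>2 * V" using V0 by simp
      show "0 \<le> t 0" by (rule t00)
      fix j
      have "t 0 ^ (2 ^ Suc j) \<le> V ^ (2 ^ Suc j - 1) * t (Suc j)" by (rule ind)
      also have "\<dots> \<le> V ^ (2 ^ Suc j - 1) * (real (n - 1) * (\<sigma>\<^sup>2) ^ (2 ^ Suc j) * V)"
        by (rule mult_left_mono[OF tSb]) (use V0 in simp)
      also have "\<dots> = real (n - 1) * (\<sigma>\<^sup>2 * V) ^ (2 ^ Suc j)"
      proof -
        define K where "K = (2::nat) ^ Suc j"
        have K: "K > 0" unfolding K_def by simp
        have "V ^ (K - 1) * V = V ^ K" using K by (rule pow_pred)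
        then have "V ^ (K - 1) * (real (n - 1) * (\<sigma>\<^sup>2) ^ K * V) = real (n - 1) * ((\<sigma>\<^sup>2) ^ K * V ^ K)"
          by (metis mult.assoc mult.left_commute)
        also have "\<dots> = real (n - 1) * (\<sigma>\<^sup>2 * V) ^ K" by (simp only: power_mult_distrib)
        finally show ?thesis unfolding K_def .
      qed
      finally show "t 0 ^ (2 ^ Suc j) \<le> real (n - 1) * (\<sigma>\<^sup>2 * V) ^ (2 ^ Suc j)" .
    qed
    then show ?thesis unfolding t0 V_def .
  qed
  show ?thesis using s0 main unfolding \<sigma>_def by blast
qed

end


lemma vnorm_sum: "v \<in> carrier_vec d \<Longrightarrow> vnorm v = sqrt (\<Sum>i<d. (v $ i)\<^sup>2)"
  unfolding vnorm_def by (simp add: sprod_self)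

lemma vnorm_diff: "a \<in> carrier_vec d \<Longrightarrow> b \<in> carrier_vec d \<Longrightarrow>
   vnorm (a - b) = sqrt (\<Sum>i<d. (a $ i - b $ i)\<^sup>2)"
  by (subst vnorm_sum[of _ d]) auto

definition Dsq :: "nat \<Rightarrow> real vec \<Rightarrow> real vec \<Rightarrow> real" where
  "Dsq d x q = (\<Sum>i<d. (x $ i - q $ i)\<^sup>2)"

lemma Dsq_nonneg: "Dsq d x q \<ge> 0" unfolding Dsq_def by (simp add: sum_nonneg)

lemma vnorm_Dsq: "a \<in> carrier_vec d \<Longrightarrow> b \<in> carrier_vec d \<Longrightarrow> vnorm (a - b) = sqrt (Dsq d a b)"
  unfolding Dsq_def by (rule vnorm_diff)

lemma convex_comb_idx:
  "u \<in> carrier_vec d \<Longrightarrow> v \<in> carrier_vec d \<Longrightarrow> i < d \<Longrightarrow>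
   (\<theta> \<cdot>\<^sub>v u + (1 - \<theta>) \<cdot>\<^sub>v v) $ i = \<theta> * u $ i + (1 - \<theta>) * v $ i"
  by simp

lemma convex_comb_carrier:
  "u \<in> carrier_vec d \<Longrightarrow> v \<in> carrier_vec d \<Longrightarrow> \<theta> \<cdot>\<^sub>v u + (1 - \<theta>) \<cdot>\<^sub>v v \<in> carrier_vec d"
  by simp

section \<open>Existence of a nearest point\<close>

lemma nearest_exists:
  assumes ne: "\<Omega> \<noteq> {}" and cv: "convex_vset d \<Omega>" and cl: "closed_vset d \<Omega>"
    and x: "x \<in> carrier_vec d"
  shows "\<exists>p\<in>\<Omega>. \<forall>q\<in>\<Omega>. Dsq d x p \<le> Dsq d x q"
proof -
  have sub: "\<Omega> \<subseteq> carrier_vec d" using cv unfolding convex_vset_def by auto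
  define S where "S = Dsq d x ` \<Omega>"
  define \<delta> where "\<delta> = Inf S"
  have Sne: "S \<noteq> {}" using ne unfolding S_def by auto
  have bdd: "bdd_below S" unfolding S_def by (rule bdd_belowI[of _ 0]) (auto simp: Dsq_nonneg)
  have dle: "\<delta> \<le> Dsq d x q" if "q \<in> \<Omega>" for q
    unfolding \<delta>_def S_def by (rule cInf_lower) (use that bdd in \<open>auto simp: S_def\<close>)
  have "\<exists>q\<in>\<Omega>. Dsq d x q < \<delta> + 1 / real (Suc k)" for k
  proof -
    have "Inf S < \<delta> + 1 / real (Suc k)" unfolding \<delta>_def by simp
    from cInf_lessD[OF Sne this] show ?thesis unfolding S_def by auto
  qed
  then obtain s where s\<Omega>: "\<And>k. s k \<in> \<Omega>" and sD: "\<And>k. Dsq d x (s k) < \<delta> + 1 / real (Suc k)"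
    by metis
  have sc: "s k \<in> carrier_vec d" for k using s\<Omega> sub by auto
  \<comment> \<open>parallelogram estimate\<close>
  have para: "(\<Sum>i<d. (s k $ i - s l $ i)\<^sup>2) \<le> 2 * Dsq d x (s k) + 2 * Dsq d x (s l) - 4 * \<delta>" for k l
  proof -
    define m where "m = (1/2::real) \<cdot>\<^sub>v s k + (1 - 1/2) \<cdot>\<^sub>v s l"
    have cvx: "\<forall>u\<in>\<Omega>. \<forall>v\<in>\<Omega>. \<forall>\<theta>::real. 0 \<le> \<theta> \<and> \<theta> \<le> 1 \<longrightarrow> \<theta> \<cdot>\<^sub>v u + (1 - \<theta>) \<cdot>\<^sub>v v \<in> \<Omega>"
      using cv unfolding convex_vset_def by blast
    have m\<Omega>: "m \<in> \<Omega>" unfolding m_def by (rule cvx[rule_format]) (auto simp: s\<Omega>)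
    have e: "2 * Dsq d x (s k) + 2 * Dsq d x (s l) - 4 * Dsq d x m =
       (\<Sum>i<d. 2 * (x $ i - s k $ i)\<^sup>2 + 2 * (x $ i - s l $ i)\<^sup>2 - 4 * (x $ i - m $ i)\<^sup>2)"
      unfolding Dsq_def by (simp add: sum_distrib_left sum.distrib sum_subtractf)
    have "(\<Sum>i<d. (s k $ i - s l $ i)\<^sup>2) = 2 * Dsq d x (s k) + 2 * Dsq d x (s l) - 4 * Dsq d x m"
    proof -
      have mi: "m $ i = (s k $ i + s l $ i) / 2" if "i < d" for i
        unfolding m_def using sc[of k] sc[of l] that by simp
      show ?thesis unfolding e
        by (rule sum.cong) (auto simp: mi power2_eq_square algebra_simps)
    qed
    then show ?thesis using dle[OF m\<Omega>] by simp
  qed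
  have cauchy_comp: "Cauchy (\<lambda>k. s k $ i)" if i: "i < d" for i
  proof (rule metric_CauchyI)
    fix e :: real assume e: "e > 0"
    obtain N0 where N0: "4 / e\<^sup>2 < real N0" using reals_Archimedean2 by blast
    define N where "N = N0"
    have N: "4 / e\<^sup>2 < real (Suc N)" using N0 unfolding N_def by simp
    have "dist (s k $ i) (s l $ i) < e" if k: "k \<ge> N" and l: "l \<ge> N" for k l
    proof -
      have "(s k $ i - s l $ i)\<^sup>2 \<le> (\<Sum>j<d. (s k $ j - s l $ j)\<^sup>2)"
        by (rule member_le_sum) (use i in auto)
      also have "\<dots> \<le> 2 * Dsq d x (s k) + 2 * Dsq d x (s l) - 4 * \<delta>" by (rule para)
      also have "\<dots> < 2 * (\<delta> + 1 / real (Suc k)) + 2 * (\<delta> + 1 / real (Suc l)) - 4 * \<delta>"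
        using sD[of k] sD[of l] by simp
      also have "\<dots> = 2 / real (Suc k) + 2 / real (Suc l)" by simp
      also have "\<dots> \<le> 2 / real (Suc N) + 2 / real (Suc N)"
        using k l by (intro add_mono divide_left_mono) auto
      also have "\<dots> = 4 / real (Suc N)" by simp
      also have "\<dots> < e\<^sup>2"
        using N e by (simp add: divide_less_eq mult.commute)
      finally have "(s k $ i - s l $ i)\<^sup>2 < e\<^sup>2" .
      then have "\<bar>s k $ i - s l $ i\<bar>\<^sup>2 < e\<^sup>2" by simp
      then have "\<bar>s k $ i - s l $ i\<bar> < e" by (rule power2_less_imp_less) (use e in simp)
      then show ?thesis by (simp add: dist_real_def)
    qed
    then show "\<exists>M. \<forall>m\<ge>M. \<forall>n\<ge>M. dist (s m $ i) (s n $ i) < e" by blast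
  qed
  define p where "p = vec d (\<lambda>i. lim (\<lambda>k. s k $ i))"
  have pc: "p \<in> carrier_vec d" unfolding p_def by simp
  have comp_lim: "(\<lambda>k. s k $ i) \<longlonglongrightarrow> p $ i" if i: "i < d" for i
    unfolding p_def using i Cauchy_convergent_iff[of "\<lambda>k. s k $ i"] cauchy_comp[OF i]
    by (simp add: convergent_LIMSEQ_iff)
  have "(\<lambda>k. (\<Sum>i<d. (s k $ i - p $ i)\<^sup>2)) \<longlonglongrightarrow> (\<Sum>i<d. (p $ i - p $ i)\<^sup>2)"
    by (intro tendsto_intros tendsto_sum) (use comp_lim in auto)
  then have "(\<lambda>k. sqrt (\<Sum>i<d. (s k $ i - p $ i)\<^sup>2)) \<longlonglongrightarrow> sqrt 0"
    by (intro tendsto_real_sqrt) simp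
  then have "(\<lambda>k. vnorm (s k - p)) \<longlonglongrightarrow> 0"
    using vnorm_diff[OF sc pc] by simp
  then have p\<Omega>: "p \<in> \<Omega>" using cl s\<Omega> pc unfolding closed_vset_def by blast
  have "(\<lambda>k. Dsq d x (s k)) \<longlonglongrightarrow> Dsq d x p"
    unfolding Dsq_def by (intro tendsto_intros tendsto_sum) (use comp_lim in auto)
  moreover have "(\<lambda>k. \<delta> + 1 / real (Suc k)) \<longlonglongrightarrow> \<delta> + 0"
    by (intro tendsto_intros LIMSEQ_inverse_real_of_nat[unfolded inverse_eq_divide])
  ultimately have "Dsq d x p \<le> \<delta> + 0"
    by (rule LIMSEQ_le) (use sD less_imp_le in blast)
  then have "Dsq d x p \<le> Dsq d x q" if "q \<in> \<Omega>" for q using dle[OF that] by simp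
  then show ?thesis using p\<Omega> by blast
qed


lemma proj_props:
  assumes ne: "\<Omega> \<noteq> {}" and cv: "convex_vset d \<Omega>" and cl: "closed_vset d \<Omega>"
    and x: "x \<in> carrier_vec d"
  shows "proj \<Omega> x \<in> \<Omega> \<and> (\<forall>q\<in>\<Omega>. Dsq d x (proj \<Omega> x) \<le> Dsq d x q)"
proof -
  have sub: "\<Omega> \<subseteq> carrier_vec d" using cv unfolding convex_vset_def by auto
  obtain p where p: "p \<in> \<Omega>" "\<forall>q\<in>\<Omega>. Dsq d x p \<le> Dsq d x q"
    using nearest_exists[OF ne cv cl x] by blast
  have "\<exists>p. p \<in> \<Omega> \<and> (\<forall>q\<in>\<Omega>. vnorm (x - p) \<le> vnorm (x - q))"
  proof (intro exI[of _ p] conjI ballI)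
    show "p \<in> \<Omega>" by (rule p(1))
    fix q assume q: "q \<in> \<Omega>"
    have pc: "p \<in> carrier_vec d" and qc: "q \<in> carrier_vec d" using sub p(1) q by auto
    have "sqrt (Dsq d x p) \<le> sqrt (Dsq d x q)" using p(2) q by simp
    then show "vnorm (x - p) \<le> vnorm (x - q)"
      unfolding vnorm_Dsq[OF x pc] vnorm_Dsq[OF x qc] .
  qed
  then have pp: "proj \<Omega> x \<in> \<Omega> \<and> (\<forall>q\<in>\<Omega>. vnorm (x - proj \<Omega> x) \<le> vnorm (x - q))"
    unfolding proj_def by (rule someI_ex)
  have "Dsq d x (proj \<Omega> x) \<le> Dsq d x q" if q: "q \<in> \<Omega>" for q
  proof -
    have pc: "proj \<Omega> x \<in> carrier_vec d" and qc: "q \<in> carrier_vec d" using sub pp q by auto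
    have "vnorm (x - proj \<Omega> x) \<le> vnorm (x - q)" using pp q by blast
    then have "sqrt (Dsq d x (proj \<Omega> x)) \<le> sqrt (Dsq d x q)"
      unfolding vnorm_Dsq[OF x pc] vnorm_Dsq[OF x qc] .
    then show ?thesis by simp
  qed
  then show ?thesis using pp by blast
qed

lemma variational:
  assumes cv: "convex_vset d \<Omega>" and x: "x \<in> carrier_vec d"
    and p: "p \<in> \<Omega>" and pmin: "\<forall>q\<in>\<Omega>. Dsq d x p \<le> Dsq d x q" and q: "q \<in> \<Omega>"
  shows "(\<Sum>i<d. (x $ i - p $ i) * (q $ i - p $ i)) \<le> 0"
proof (rule ccontr)
  have sub: "\<Omega> \<subseteq> carrier_vec d" using cv unfolding convex_vset_def by auto
  have pc: "p \<in> carrier_vec d" and qc: "q \<in> carrier_vec d" using p q sub by auto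
  have cvx: "\<forall>u\<in>\<Omega>. \<forall>v\<in>\<Omega>. \<forall>\<theta>::real. 0 \<le> \<theta> \<and> \<theta> \<le> 1 \<longrightarrow> \<theta> \<cdot>\<^sub>v u + (1 - \<theta>) \<cdot>\<^sub>v v \<in> \<Omega>"
    using cv unfolding convex_vset_def by blast
  define c where "c = (\<Sum>i<d. (x $ i - p $ i) * (q $ i - p $ i))"
  define e where "e = (\<Sum>i<d. (q $ i - p $ i)\<^sup>2)"
  assume "\<not> (\<Sum>i<d. (x $ i - p $ i) * (q $ i - p $ i)) \<le> 0"
  then have c0: "c > 0" unfolding c_def by simp
  have e0: "e \<ge> 0" unfolding e_def by (simp add: sum_nonneg)
  define \<theta> where "\<theta> = min 1 (c / (e + 1))"
  have th0: "\<theta> > 0" unfolding \<theta>_def using c0 e0 by simp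
  have th1: "\<theta> \<le> 1" unfolding \<theta>_def by simp
  define z where "z = \<theta> \<cdot>\<^sub>v q + (1 - \<theta>) \<cdot>\<^sub>v p"
  have z\<Omega>: "z \<in> \<Omega>" unfolding z_def by (rule cvx[rule_format]) (use q p th0 th1 in auto)
  have zi: "z $ i = p $ i + \<theta> * (q $ i - p $ i)" if "i < d" for i
    unfolding z_def using pc qc that by (simp add: algebra_simps)
  have "Dsq d x z = (\<Sum>i<d. (x $ i - p $ i)\<^sup>2 - 2 * \<theta> * ((x $ i - p $ i) * (q $ i - p $ i))
        + \<theta>\<^sup>2 * (q $ i - p $ i)\<^sup>2)"
    unfolding Dsq_def by (rule sum.cong) (auto simp: zi power2_eq_square algebra_simps)
  also have "\<dots> = Dsq d x p - 2 * \<theta> * c + \<theta>\<^sup>2 * e"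
    unfolding Dsq_def c_def e_def by (simp add: sum.distrib sum_subtractf sum_distrib_left)
  finally have eqz: "Dsq d x z = Dsq d x p - 2 * \<theta> * c + \<theta>\<^sup>2 * e" .
  have "Dsq d x p \<le> Dsq d x z" using pmin z\<Omega> by blast
  then have "Dsq d x p \<le> Dsq d x p - 2 * \<theta> * c + \<theta>\<^sup>2 * e" using eqz by simp
  then have "2 * \<theta> * c \<le> \<theta> * (\<theta> * e)" by (simp add: power2_eq_square)
  then have "2 * c \<le> \<theta> * e" using th0 by simp
  moreover have "\<theta> * e \<le> c / (e + 1) * e" unfolding \<theta>_def using e0 by (intro mult_right_mono) auto
  moreover have "c / (e + 1) * e \<le> c" using c0 e0 by (simp add: field_simps)
  ultimately show False using c0 by linarith
qed

lemma proj_nonexp: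
  assumes ne: "\<Omega> \<noteq> {}" and cv: "convex_vset d \<Omega>" and cl: "closed_vset d \<Omega>"
    and a: "a \<in> carrier_vec d" and b: "b \<in> carrier_vec d"
  shows "vnorm (proj \<Omega> a - proj \<Omega> b) \<le> vnorm (a - b)"
proof -
  have sub: "\<Omega> \<subseteq> carrier_vec d" using cv unfolding convex_vset_def by auto
  define p where "p = proj \<Omega> a"
  define q where "q = proj \<Omega> b"
  from proj_props[OF ne cv cl a] have p: "p \<in> \<Omega>" "\<forall>r\<in>\<Omega>. Dsq d a p \<le> Dsq d a r"
    unfolding p_def by auto
  from proj_props[OF ne cv cl b] have q: "q \<in> \<Omega>" "\<forall>r\<in>\<Omega>. Dsq d b q \<le> Dsq d b r"
    unfolding q_def by auto
  have pc: "p \<in> carrier_vec d" and qc: "q \<in> carrier_vec d" using p q sub by auto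
  have v1: "(\<Sum>i<d. (a $ i - p $ i) * (q $ i - p $ i)) \<le> 0" by (rule variational[OF cv a p q(1)])
  have v2: "(\<Sum>i<d. (b $ i - q $ i) * (p $ i - q $ i)) \<le> 0" by (rule variational[OF cv b q p(1)])
  define P where "P = (\<Sum>i<d. (p $ i - q $ i)\<^sup>2)"
  define A where "A = (\<Sum>i<d. (a $ i - b $ i)\<^sup>2)"
  have "(\<Sum>i<d. (a $ i - p $ i) * (q $ i - p $ i)) + (\<Sum>i<d. (b $ i - q $ i) * (p $ i - q $ i))
     = P - (\<Sum>i<d. (a $ i - b $ i) * (p $ i - q $ i))"
    unfolding P_def sum.distrib[symmetric] sum_subtractf[symmetric]
    by (rule sum.cong) (auto simp: power2_eq_square algebra_simps)
  then have "P \<le> (\<Sum>i<d. (a $ i - b $ i) * (p $ i - q $ i))" using v1 v2 by linarith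
  also have "\<dots> \<le> sqrt A * sqrt P"
  proof -
    have "(\<Sum>i<d. (a $ i - b $ i) * (p $ i - q $ i))\<^sup>2 \<le> A * P"
      unfolding A_def P_def by (rule cs_sum) simp
    then have "\<bar>\<Sum>i<d. (a $ i - b $ i) * (p $ i - q $ i)\<bar> \<le> sqrt (A * P)"
      by (simp add: real_le_rsqrt)
    then show ?thesis by (simp add: real_sqrt_mult)
  qed
  finally have PA: "P \<le> sqrt A * sqrt P" .
  have P0: "P \<ge> 0" unfolding P_def by (simp add: sum_nonneg)
  have A0: "A \<ge> 0" unfolding A_def by (simp add: sum_nonneg)
  have "sqrt P \<le> sqrt A"
  proof (cases "P = 0")
    case True then show ?thesis using A0 by simp
  next
    case False
    then have "sqrt P > 0" using P0 by simp
    moreover have "sqrt P * sqrt P \<le> sqrt A * sqrt P" using PA P0 by simp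
    ultimately show ?thesis using mult_right_le_imp_le by blast
  qed
  then show ?thesis unfolding p_def[symmetric] q_def[symmetric] P_def A_def
    using vnorm_diff[OF pc qc] vnorm_diff[OF a b] by simp
qed


definition cm :: "nat \<Rightarrow> real mat \<Rightarrow> nat \<Rightarrow> real" where
  "cm n X k = (1 / real n) * (\<Sum>j<n. X $$ (j,k))"

definition dev :: "nat \<Rightarrow> nat \<Rightarrow> real mat \<Rightarrow> real" where
  "dev n d X = (\<Sum>i<n. \<Sum>k<d. (X $$ (i,k) - cm n X k)\<^sup>2)"

lemma dev_nonneg: "dev n d X \<ge> 0" unfolding dev_def by (simp add: sum_nonneg)

lemma frob_dev:
  assumes X: "X \<in> carrier_mat n d"
  shows "frob (X - avg_mat X) = sqrt (dev n d X)"
proof -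
  have "frob (X - avg_mat X) = sqrt (\<Sum>i<n. \<Sum>k<d. ((X - avg_mat X) $$ (i,k))\<^sup>2)"
    unfolding frob_def using X by (simp add: avg_mat_def)
  also have "(\<Sum>i<n. \<Sum>k<d. ((X - avg_mat X) $$ (i,k))\<^sup>2) = dev n d X"
    unfolding dev_def cm_def using X by (auto simp: avg_mat_def intro!: sum.cong)
  finally show ?thesis .
qed

lemma mean_min:
  fixes a :: "nat \<Rightarrow> real"
  shows "(\<Sum>j<n. (a j - (1 / real n) * (\<Sum>l<n. a l))\<^sup>2) \<le> (\<Sum>j<n. (a j - z)\<^sup>2)"
proof (cases "n = 0")
  case True then show ?thesis by simp
next
  case False
  define m where "m = (1 / real n) * (\<Sum>l<n. a l)"
  have sm: "(\<Sum>l<n. a l) = real n * m" unfolding m_def using False by simp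
  have "(\<Sum>j<n. (a j - z)\<^sup>2) = (\<Sum>j<n. (a j - m)\<^sup>2 + 2 * (m - z) * (a j) - 2 * (m - z) * m + (m - z)\<^sup>2)"
    by (rule sum.cong) (auto simp: power2_eq_square algebra_simps)
  also have "\<dots> = (\<Sum>j<n. (a j - m)\<^sup>2) + 2 * (m - z) * (\<Sum>l<n. a l) - real n * (2 * (m - z) * m) + real n * (m - z)\<^sup>2"
    by (simp add: sum.distrib sum_subtractf sum_distrib_left)
  also have "\<dots> = (\<Sum>j<n. (a j - m)\<^sup>2) + real n * (m - z)\<^sup>2" unfolding sm by (simp add: algebra_simps)
  finally show ?thesis unfolding m_def[symmetric] by (simp add: sum_nonneg)
qed

lemma dev_le:
  shows "dev n d Y \<le> (\<Sum>i<n. \<Sum>k<d. (Y $$ (i,k) - z k)\<^sup>2)"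
proof -
  have "dev n d Y = (\<Sum>k<d. \<Sum>i<n. (Y $$ (i,k) - cm n Y k)\<^sup>2)" unfolding dev_def by (rule sum.swap)
  also have "\<dots> \<le> (\<Sum>k<d. \<Sum>i<n. (Y $$ (i,k) - z k)\<^sup>2)"
    by (rule sum_mono) (unfold cm_def, rule mean_min)
  also have "\<dots> = (\<Sum>i<n. \<Sum>k<d. (Y $$ (i,k) - z k)\<^sup>2)" by (rule sum.swap)
  finally show ?thesis .
qed

context dstoch begin

lemma dev_mult:
  assumes s1: "second_singular_value W < 1" and Y: "Y \<in> carrier_mat n d"
  shows "dev n d (W * Y) \<le> (second_singular_value W)\<^sup>2 * dev n d Y"
proof -
  define \<sigma> where "\<sigma> = second_singular_value W"
  note sg = spectral_gap[OF s1, folded \<sigma>_def]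
  define u where "u k = vec n (\<lambda>j. Y $$ (j,k) - cm n Y k)" for k
  have uc: "u k \<in> carrier_vec n" for k unfolding u_def by simp
  have WY: "(W * Y) $$ (i,k) = (\<Sum>j<n. W $$ (i,j) * Y $$ (j,k))" if "i < n" "k < d" for i k
    using W Y that by (simp add: scalar_prod_def atLeast0LessThan)
  have cmWY: "cm n (W * Y) k = cm n Y k" if k: "k < d" for k
  proof -
    have "(\<Sum>i<n. (W * Y) $$ (i,k)) = (\<Sum>i<n. \<Sum>j<n. W $$ (i,j) * Y $$ (j,k))"
      using WY k by simp
    also have "\<dots> = (\<Sum>j<n. (\<Sum>i<n. W $$ (i,j)) * Y $$ (j,k))"
      by (subst sum.swap) (simp add: sum_distrib_right)
    also have "\<dots> = (\<Sum>j<n. Y $$ (j,k))" using cols by simp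
    finally show ?thesis unfolding cm_def by simp
  qed
  have dk: "(W * Y) $$ (i,k) - cm n Y k = (W *\<^sub>v u k) $ i" if i: "i < n" and k: "k < d" for i k
  proof -
    have "(W *\<^sub>v u k) $ i = (\<Sum>j<n. W $$ (i,j) * (Y $$ (j,k) - cm n Y k))"
      using W i unfolding u_def by (simp add: scalar_prod_def atLeast0LessThan)
    also have "\<dots> = (\<Sum>j<n. W $$ (i,j) * Y $$ (j,k)) - (\<Sum>j<n. W $$ (i,j)) * cm n Y k"
      by (simp add: algebra_simps sum_subtractf sum_distrib_right sum_distrib_left)
    also have "\<dots> = (W * Y) $$ (i,k) - cm n Y k" using rows i WY[OF i k] by simp
    finally show ?thesis by simp
  qed
  have usum: "(\<Sum>j<n. u k $ j) = 0" for k
  proof (cases "n = 0")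
    case True then show ?thesis by simp
  next
    case False
    have "(\<Sum>j<n. u k $ j) = (\<Sum>j<n. Y $$ (j,k)) - real n * cm n Y k"
      unfolding u_def by (simp add: sum_subtractf)
    then show ?thesis unfolding cm_def using False by simp
  qed
  have "dev n d (W * Y) = (\<Sum>k<d. \<Sum>i<n. ((W * Y) $$ (i,k) - cm n (W * Y) k)\<^sup>2)"
    unfolding dev_def by (rule sum.swap)
  also have "\<dots> = (\<Sum>k<d. (W *\<^sub>v u k) \<bullet> (W *\<^sub>v u k))"
  proof (rule sum.cong[OF refl])
    fix k assume k: "k \<in> {..<d}"
    have "(\<Sum>i<n. ((W * Y) $$ (i,k) - cm n (W * Y) k)\<^sup>2) = (\<Sum>i<n. ((W *\<^sub>v u k) $ i)\<^sup>2)"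
      by (rule sum.cong) (use k dk cmWY in auto)
    also have "\<dots> = (W *\<^sub>v u k) \<bullet> (W *\<^sub>v u k)"
      by (rule sprod_self[symmetric]) (use mult_mat_vec_carrier[OF W uc] in auto)
    finally show "(\<Sum>i<n. ((W * Y) $$ (i,k) - cm n (W * Y) k)\<^sup>2) = (W *\<^sub>v u k) \<bullet> (W *\<^sub>v u k)" .
  qed
  also have "\<dots> \<le> (\<Sum>k<d. \<sigma>\<^sup>2 * (u k \<bullet> u k))"
    by (rule sum_mono) (use sg uc usum in blast)
  also have "\<dots> = \<sigma>\<^sup>2 * (\<Sum>k<d. \<Sum>j<n. (Y $$ (j,k) - cm n Y k)\<^sup>2)"
  proof -
    have "u k \<bullet> u k = (\<Sum>j<n. (Y $$ (j,k) - cm n Y k)\<^sup>2)" for k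
      unfolding sprod_self[OF uc] by (simp add: u_def)
    then show ?thesis by (simp add: sum_distrib_left)
  qed
  also have "(\<Sum>k<d. \<Sum>j<n. (Y $$ (j,k) - cm n Y k)\<^sup>2) = dev n d Y"
    unfolding dev_def by (rule sum.swap)
  finally show ?thesis unfolding \<sigma>_def .
qed

end


lemma minkowski:
  fixes f g :: "'a \<Rightarrow> real"
  assumes fin: "finite A"
  shows "sqrt (\<Sum>i\<in>A. (f i + g i)\<^sup>2) \<le> sqrt (\<Sum>i\<in>A. (f i)\<^sup>2) + sqrt (\<Sum>i\<in>A. (g i)\<^sup>2)"
proof -
  define F where "F = (\<Sum>i\<in>A. (f i)\<^sup>2)"
  define G where "G = (\<Sum>i\<in>A. (g i)\<^sup>2)"
  define B where "B = (\<Sum>i\<in>A. f i * g i)"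
  have F0: "F \<ge> 0" and G0: "G \<ge> 0" unfolding F_def G_def by (simp_all add: sum_nonneg)
  have "B\<^sup>2 \<le> F * G" unfolding B_def F_def G_def by (rule cs_sum[OF fin])
  then have "\<bar>B\<bar> \<le> sqrt (F * G)" by (simp add: real_le_rsqrt)
  then have Bb: "B \<le> sqrt F * sqrt G" by (simp add: real_sqrt_mult)
  have "(\<Sum>i\<in>A. (f i + g i)\<^sup>2) = F + 2 * B + G"
    unfolding F_def G_def B_def by (simp add: power2_sum sum.distrib sum_distrib_left mult.assoc)
  also have "\<dots> \<le> F + 2 * (sqrt F * sqrt G) + G" using Bb by simp
  also have "\<dots> = (sqrt F + sqrt G)\<^sup>2" using F0 G0 by (simp add: power2_sum)
  finally have "sqrt (\<Sum>i\<in>A. (f i + g i)\<^sup>2) \<le> sqrt ((sqrt F + sqrt G)\<^sup>2)"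
    by (rule real_sqrt_le_mono)
  also have "\<dots> = sqrt F + sqrt G" using F0 G0 by simp
  finally show ?thesis unfolding F_def G_def .
qed

lemma vnorm_nonneg: "vnorm v \<ge> 0"
  unfolding vnorm_def scalar_prod_def by (simp add: sum_nonneg)

context dstoch begin

lemma step:
  assumes s1: "second_singular_value W < 1"
    and X: "X \<in> carrier_mat n d" and G: "G \<in> carrier_mat n d"
    and Gb: "\<forall>i<n. vnorm (row G i) \<le> L" and a0: "\<alpha> \<ge> 0" and L0: "L \<ge> 0"
    and ne: "\<Omega> \<noteq> {}" and cv: "convex_vset d \<Omega>" and cl: "closed_vset d \<Omega>"
  shows "sqrt (dev n d (W * mat_of_rows d (map (\<lambda>i. proj \<Omega> (row X i - \<alpha> \<cdot>\<^sub>v row G i)) [0..<n])))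
    \<le> second_singular_value W * (sqrt (dev n d X) + \<alpha> * L * sqrt (real n))"
proof -
  define \<sigma> where "\<sigma> = second_singular_value W"
  have s0: "\<sigma> \<ge> 0" using spectral_gap[OF s1] unfolding \<sigma>_def by blast
  have sub: "\<Omega> \<subseteq> carrier_vec d" using cv unfolding convex_vset_def by auto
  define p where "p i = proj \<Omega> (row X i - \<alpha> \<cdot>\<^sub>v row G i)" for i
  define Y where "Y = mat_of_rows d (map p [0..<n])"
  have Y: "Y \<in> carrier_mat n d" unfolding Y_def using mat_of_rows_carrier(1)[of d "map p [0..<n]"] by simp
  have rc: "row X i - \<alpha> \<cdot>\<^sub>v row G i \<in> carrier_vec d" if "i < n" for i using X G that by auto
  have pc: "p i \<in> carrier_vec d" if "i < n" for i
    using proj_props[OF ne cv cl rc[OF that]] sub unfolding p_def by auto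
  have Yij: "Y $$ (i,k) = p i $ k" if "i < n" "k < d" for i k
    unfolding Y_def using that by (simp add: mat_of_rows_index)
  define xb where "xb = vec d (\<lambda>k. cm n X k)"
  have xbc: "xb \<in> carrier_vec d" unfolding xb_def by simp
  define z where "z = proj \<Omega> xb"
  have zc: "z \<in> carrier_vec d" using proj_props[OF ne cv cl xbc] sub unfolding z_def by auto
  define a where "a i = vnorm (row X i - xb)" for i
  have a0': "a i \<ge> 0" for i unfolding a_def by (rule vnorm_nonneg)
  have dX: "dev n d X = (\<Sum>i<n. (a i)\<^sup>2)"
  proof -
    have "(a i)\<^sup>2 = (\<Sum>k<d. (X $$ (i,k) - cm n X k)\<^sup>2)" if i: "i < n" for i
      unfolding a_def using vnorm_diff[of "row X i" d xb] X xbc i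
      by (simp add: xb_def sum_nonneg)
    then show ?thesis unfolding dev_def by simp
  qed
  have pz: "vnorm (p i - z) \<le> a i + \<alpha> * L" if i: "i < n" for i
  proof -
    have "vnorm (p i - z) \<le> vnorm ((row X i - \<alpha> \<cdot>\<^sub>v row G i) - xb)"
      unfolding p_def z_def by (rule proj_nonexp[OF ne cv cl rc[OF i] xbc])
    also have "\<dots> = sqrt (\<Sum>k<d. ((X $$ (i,k) - xb $ k) + (- \<alpha> * G $$ (i,k)))\<^sup>2)"
      using vnorm_diff[OF rc[OF i] xbc] X G i by (simp add: algebra_simps)
    also have "\<dots> \<le> sqrt (\<Sum>k<d. (X $$ (i,k) - xb $ k)\<^sup>2) + sqrt (\<Sum>k<d. (- \<alpha> * G $$ (i,k))\<^sup>2)"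
      by (rule minkowski) simp
    also have "sqrt (\<Sum>k<d. (X $$ (i,k) - xb $ k)\<^sup>2) = a i"
      unfolding a_def using vnorm_diff[of "row X i" d xb] X xbc i by simp
    also have "sqrt (\<Sum>k<d. (- \<alpha> * G $$ (i,k))\<^sup>2) = \<alpha> * vnorm (row G i)"
    proof -
      have "(\<Sum>k<d. (- \<alpha> * G $$ (i,k))\<^sup>2) = \<alpha>\<^sup>2 * (\<Sum>k<d. (row G i $ k)\<^sup>2)"
        using G i by (simp add: power_mult_distrib sum_distrib_left)
      then show ?thesis using a0 vnorm_sum[of "row G i" d] G i by (simp add: real_sqrt_mult)
    qed
    also have "\<alpha> * vnorm (row G i) \<le> \<alpha> * L" using Gb i a0 by (simp add: mult_left_mono)
    finally show ?thesis by simp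
  qed
  have "dev n d Y \<le> (\<Sum>i<n. \<Sum>k<d. (Y $$ (i,k) - z $ k)\<^sup>2)" by (rule dev_le)
  also have "\<dots> = (\<Sum>i<n. (vnorm (p i - z))\<^sup>2)"
  proof (rule sum.cong[OF refl])
    fix i assume "i \<in> {..<n}"
    then have i: "i < n" by simp
    have "(vnorm (p i - z))\<^sup>2 = (\<Sum>k<d. (p i $ k - z $ k)\<^sup>2)"
      using vnorm_diff[OF pc[OF i] zc] by (simp add: sum_nonneg)
    then show "(\<Sum>k<d. (Y $$ (i,k) - z $ k)\<^sup>2) = (vnorm (p i - z))\<^sup>2" using Yij i by simp
  qed
  also have "\<dots> \<le> (\<Sum>i<n. (a i + \<alpha> * L)\<^sup>2)"
    by (rule sum_mono) (use pz vnorm_nonneg in \<open>auto intro!: power_mono\<close>)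
  finally have dY: "sqrt (dev n d Y) \<le> sqrt (\<Sum>i<n. (a i + \<alpha> * L)\<^sup>2)" by simp
  also have "\<dots> \<le> sqrt (\<Sum>i<n. (a i)\<^sup>2) + sqrt (\<Sum>i<n. (\<alpha> * L)\<^sup>2)" by (rule minkowski) simp
  also have "sqrt (\<Sum>i<n. (\<alpha> * L)\<^sup>2) = \<alpha> * L * sqrt (real n)"
    using a0 L0 by (simp add: real_sqrt_mult)
  finally have dY2: "sqrt (dev n d Y) \<le> sqrt (dev n d X) + \<alpha> * L * sqrt (real n)" unfolding dX .
  have "sqrt (dev n d (W * Y)) \<le> sqrt (\<sigma>\<^sup>2 * dev n d Y)"
    using dev_mult[OF s1 Y] unfolding \<sigma>_def by simp
  also have "\<dots> = \<sigma> * sqrt (dev n d Y)" using s0 by (simp add: real_sqrt_mult)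
  also have "\<dots> \<le> \<sigma> * (sqrt (dev n d X) + \<alpha> * L * sqrt (real n))"
    by (rule mult_left_mono[OF dY2 s0])
  finally show ?thesis unfolding \<sigma>_def Y_def p_def .
qed

end


lemma geom_bound:
  fixes \<sigma> :: real
  assumes s0: "0 \<le> \<sigma>" and s1: "\<sigma> < 1"
  shows "(\<Sum>k<t. \<sigma> ^ (t - k)) \<le> 1 / (1 - \<sigma>)"
proof (induct t)
  case 0 then show ?case using s1 by simp
next
  case (Suc t)
  have "(\<Sum>k<Suc t. \<sigma> ^ (Suc t - k)) = (\<Sum>k<t. \<sigma> * \<sigma> ^ (t - k)) + \<sigma>"
    by (simp add: Suc_diff_le)
  also have "\<dots> = \<sigma> * ((\<Sum>k<t. \<sigma> ^ (t - k)) + 1)" by (simp add: sum_distrib_left algebra_simps)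
  also have "\<dots> \<le> \<sigma> * (1 / (1 - \<sigma>) + 1)" using Suc s0 by (intro mult_left_mono) auto
  also have "\<dots> \<le> 1 / (1 - \<sigma>)"
  proof -
    have "(1 - \<sigma>)\<^sup>2 \<ge> 0" by simp
    then have "\<sigma> * (2 - \<sigma>) \<le> 1" by (simp add: power2_eq_square algebra_simps)
    have "\<sigma> * (1 / (1 - \<sigma>) + 1) = \<sigma> * (2 - \<sigma>) / (1 - \<sigma>)" using s1 by (simp add: field_simps)
    also have "\<dots> \<le> 1 / (1 - \<sigma>)" using \<open>\<sigma> * (2 - \<sigma>) \<le> 1\<close> s1 by (simp add: divide_right_mono)
    finally show ?thesis .
  qed
  finally show ?case .
qed

lemma pow_exp_bound:
  fixes \<sigma> :: real
  assumes s0: "0 \<le> \<sigma>"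
  shows "\<sigma> ^ m \<le> exp (- (1 - \<sigma>) * real m)"
proof -
  have "\<sigma> \<le> exp (\<sigma> - 1)" using exp_ge_add_one_self[of "\<sigma> - 1"] by simp
  then have "\<sigma> ^ m \<le> exp (\<sigma> - 1) ^ m" by (rule power_mono) (use s0 in simp)
  also have "\<dots> = exp (- (1 - \<sigma>) * real m)" by (simp add: exp_of_nat_mult[symmetric] mult.commute)
  finally show ?thesis .
qed

lemma S_bound:
  fixes \<alpha> :: "nat \<Rightarrow> real" and \<sigma> C :: real
  assumes s0: "0 \<le> \<sigma>" and s1: "\<sigma> < 1" and apos: "\<forall>t. \<alpha> t > 0" and adec: "\<forall>t. \<alpha> (Suc t) \<le> \<alpha> t"
    and aC: "\<forall>t. \<alpha> (t div 2) \<le> C * \<alpha> t"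
    and cond: "real t \<ge> 2 / (1 - \<sigma>) * ln ((1 - \<sigma>) * real t * \<alpha> 0 / (C * \<alpha> t))"
  shows "(\<Sum>k<t. \<sigma> ^ (t - k) * \<alpha> k) \<le> 2 * C * \<alpha> t / (1 - \<sigma>)"
proof -
  have dec: "decseq \<alpha>" using adec by (simp add: decseq_Suc_iff)
  have C1: "C \<ge> 1" using aC[rule_format, of 0] apos by simp
  have at: "\<alpha> t > 0" using apos by simp
  define h where "h = t div 2"
  have ht: "h \<le> t" unfolding h_def by simp
  have CA: "C * \<alpha> t > 0" using C1 at by simp
  have oms: "1 - \<sigma> > 0" using s1 by simp
  have split: "(\<Sum>k<t. \<sigma> ^ (t - k) * \<alpha> k) = (\<Sum>k\<in>{0..<h}. \<sigma> ^ (t - k) * \<alpha> k) + (\<Sum>k\<in>{h..<t}. \<sigma> ^ (t - k) * \<alpha> k)"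
    using ht by (simp add: sum.atLeastLessThan_concat atLeast0LessThan[symmetric])
  have part2: "(\<Sum>k\<in>{h..<t}. \<sigma> ^ (t - k) * \<alpha> k) \<le> C * \<alpha> t / (1 - \<sigma>)"
  proof -
    have "(\<Sum>k\<in>{h..<t}. \<sigma> ^ (t - k) * \<alpha> k) \<le> (\<Sum>k\<in>{h..<t}. \<sigma> ^ (t - k) * \<alpha> h)"
    proof (rule sum_mono)
      fix k assume k: "k \<in> {h..<t}"
      have "\<alpha> k \<le> \<alpha> h" using k by (intro decseqD[OF dec]) auto
      then show "\<sigma> ^ (t - k) * \<alpha> k \<le> \<sigma> ^ (t - k) * \<alpha> h" using s0 by (simp add: mult_left_mono)
    qed
    also have "\<dots> = \<alpha> h * (\<Sum>k\<in>{h..<t}. \<sigma> ^ (t - k))" by (simp add: sum_distrib_left mult.commute)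
    also have "\<dots> \<le> \<alpha> h * (\<Sum>k<t. \<sigma> ^ (t - k))"
      by (rule mult_left_mono, rule sum_mono2) (use apos s0 in \<open>auto simp: less_imp_le\<close>)
    also have "\<dots> \<le> \<alpha> h * (1 / (1 - \<sigma>))"
      by (rule mult_left_mono[OF geom_bound[OF s0 s1]]) (use apos in \<open>simp add: less_imp_le\<close>)
    also have "\<dots> \<le> C * \<alpha> t * (1 / (1 - \<sigma>))"
      by (rule mult_right_mono) (use aC oms in \<open>auto simp: h_def\<close>)
    finally show ?thesis by simp
  qed
  have part1: "(\<Sum>k\<in>{0..<h}. \<sigma> ^ (t - k) * \<alpha> k) \<le> C * \<alpha> t / (1 - \<sigma>)"
  proof -
    have "(\<Sum>k\<in>{0..<h}. \<sigma> ^ (t - k) * \<alpha> k) \<le> real (card {0..<h}) * (\<sigma> ^ (t - h) * \<alpha> 0)"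
    proof (rule sum_bounded_above)
      fix k assume k: "k \<in> {0..<h}"
      have "\<sigma> ^ (t - k) \<le> \<sigma> ^ (t - h)" by (rule power_decreasing) (use k s0 s1 in auto)
      moreover have "\<alpha> k \<le> \<alpha> 0" using dec by (auto intro: decseqD)
      ultimately show "\<sigma> ^ (t - k) * \<alpha> k \<le> \<sigma> ^ (t - h) * \<alpha> 0"
        using apos s0 by (intro mult_mono) (auto simp: less_imp_le)
    qed
    also have "\<dots> = real h * \<sigma> ^ (t - h) * \<alpha> 0" by simp
    also have "\<dots> \<le> C * \<alpha> t / (1 - \<sigma>)"
    proof (cases "h = 0")
      case True then show ?thesis using CA oms by simp
    next
      case False
      then have t2: "t \<ge> 2" unfolding h_def by simp
      define R where "R = (1 - \<sigma>) * real t * \<alpha> 0 / (C * \<alpha> t)"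
      have Rpos: "R > 0" unfolding R_def using oms t2 apos CA by simp
      have th: "real (t - h) \<ge> real t / 2" unfolding h_def by linarith
      have "\<sigma> ^ (t - h) \<le> exp (- (1 - \<sigma>) * real (t - h))" by (rule pow_exp_bound[OF s0])
      also have "\<dots> \<le> exp (- ((1 - \<sigma>) * real t / 2))"
      proof -
        have "(1 - \<sigma>) * (real t / 2) \<le> (1 - \<sigma>) * real (t - h)" using th oms by (intro mult_left_mono) auto
        then have "- (1 - \<sigma>) * real (t - h) \<le> - ((1 - \<sigma>) * real t / 2)" by (simp add: algebra_simps)
        then show ?thesis by (simp only: exp_le_cancel_iff)
      qed
      also have "\<dots> \<le> exp (- ln R)"
      proof -
        have "2 / (1 - \<sigma>) * ln R \<le> real t" using cond unfolding R_def by simp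
        then have "ln R \<le> (1 - \<sigma>) * real t / 2" using oms by (simp add: field_simps)
        then show ?thesis by simp
      qed
      also have "\<dots> = 1 / R" using Rpos by (simp add: exp_minus inverse_eq_divide)
      finally have sb: "\<sigma> ^ (t - h) \<le> 1 / R" .
      have "real h * \<sigma> ^ (t - h) * \<alpha> 0 \<le> real h * (1 / R) * \<alpha> 0"
        using sb apos by (intro mult_right_mono mult_left_mono) (auto simp: less_imp_le)
      also have "\<dots> \<le> (real t / 2) * (1 / R) * \<alpha> 0"
        using Rpos apos unfolding h_def by (intro mult_right_mono) (auto simp: less_imp_le)
      also have "\<dots> = C * \<alpha> t / (2 * (1 - \<sigma>))"
      proof -
        have a0p: "\<alpha> 0 > 0" using apos by simp
        have tp: "real t > 0" using t2 by simp
        show ?thesis unfolding R_def using oms tp a0p CA by (simp add: field_simps)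
      qed
      also have "\<dots> \<le> C * \<alpha> t / (1 - \<sigma>)" using CA oms by (intro divide_left_mono) auto
      finally show ?thesis .
    qed
    finally show ?thesis .
  qed
  show ?thesis unfolding split using part1 part2 by simp
qed


theorem lemma3:
  shows "\<exists>c::real. c > 0 \<and>
   (\<forall>(n::nat) (d::nat) (W::real mat) (f::nat \<Rightarrow> real vec \<Rightarrow> real) (L::real)
      (\<Omega>::real vec set) (\<alpha>::nat \<Rightarrow> real) (C\<alpha>::real) (C\<alpha>'::real)
      (x::nat \<Rightarrow> real mat) (g::nat \<Rightarrow> real mat).
     (\<forall>i<n. convex_vfun d (f i)) \<and>
     (\<forall>i<n. \<forall>u\<in>carrier_vec d. \<forall>s. subgrad d (f i) u s \<longrightarrow> vnorm s \<le> L) \<and>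
     \<Omega> \<noteq> {} \<and> convex_vset d \<Omega> \<and> closed_vset d \<Omega> \<and>
     doubly_stochastic_pos n W \<and> strongly_connected_mat n W \<and>
     second_singular_value W < 1 \<and>
     (\<forall>t. \<alpha> t > 0) \<and> (\<forall>t. \<alpha> (Suc t) \<le> \<alpha> t) \<and>
     summable (\<lambda>t. (\<alpha> t)\<^sup>2) \<and> \<not> summable \<alpha> \<and>
     (\<forall>t::nat. (\<Sum>k\<in>{1..t}. \<alpha> k) \<le> C\<alpha> * (\<Sum>k\<in>{nat \<lceil>real t / 2\<rceil>..t}. \<alpha> k)) \<and>
     (\<forall>t::nat. \<alpha> (t div 2) \<le> C\<alpha>' * \<alpha> t) \<and>
     (\<forall>t. g t \<in> carrier_mat n d \<and> (\<forall>i<n. subgrad d (f i) (row (x t) i) (row (g t) i))) \<and>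
     x 0 \<in> carrier_mat n d \<and> (\<exists>v\<in>\<Omega>. \<forall>i<n. row (x 0) i = v) \<and>
     (\<forall>t. x (Suc t) = W * mat_of_rows d
            (map (\<lambda>i. proj \<Omega> (row (x t) i - \<alpha> t \<cdot>\<^sub>v row (g t) i)) [0..<n]))
     \<longrightarrow>
     (\<forall>t::nat.
        real t \<ge> c / (1 - second_singular_value W) *
          ln ((1 - second_singular_value W) * real t * (SUP s. \<alpha> s) / (C\<alpha>' * \<alpha> t))
        \<longrightarrow>
        frob (x t - avg_mat (x t)) \<le>
          2 * C\<alpha>' * \<alpha> t * L * sqrt (real n) / (1 - second_singular_value W)))"
proof (rule exI[of _ 2], intro conjI allI impI)
  show "(2::real) > 0" by simp
  fix n d W f L \<Omega> \<alpha> C\<alpha> C\<alpha>' x g t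
  assume H: "(\<forall>i<n. convex_vfun d (f i)) \<and>
     (\<forall>i<n. \<forall>u\<in>carrier_vec d. \<forall>s. subgrad d (f i) u s \<longrightarrow> vnorm s \<le> L) \<and>
     \<Omega> \<noteq> {} \<and> convex_vset d \<Omega> \<and> closed_vset d \<Omega> \<and>
     doubly_stochastic_pos n W \<and> strongly_connected_mat n W \<and>
     second_singular_value W < 1 \<and>
     (\<forall>t. \<alpha> t > 0) \<and> (\<forall>t. \<alpha> (Suc t) \<le> \<alpha> t) \<and>
     summable (\<lambda>t. (\<alpha> t)\<^sup>2) \<and> \<not> summable \<alpha> \<and>
     (\<forall>t::nat. (\<Sum>k\<in>{1..t}. \<alpha> k) \<le> C\<alpha> * (\<Sum>k\<in>{nat \<lceil>real t / 2\<rceil>..t}. \<alpha> k)) \<and>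
     (\<forall>t::nat. \<alpha> (t div 2) \<le> C\<alpha>' * \<alpha> t) \<and>
     (\<forall>t. g t \<in> carrier_mat n d \<and> (\<forall>i<n. subgrad d (f i) (row (x t) i) (row (g t) i))) \<and>
     x 0 \<in> carrier_mat n d \<and> (\<exists>v\<in>\<Omega>. \<forall>i<n. row (x 0) i = v) \<and>
     (\<forall>t. x (Suc t) = W * mat_of_rows d
            (map (\<lambda>i. proj \<Omega> (row (x t) i - \<alpha> t \<cdot>\<^sub>v row (g t) i)) [0..<n]))"
  assume cond: "real t \<ge> 2 / (1 - second_singular_value W) *
          ln ((1 - second_singular_value W) * real t * (SUP s. \<alpha> s) / (C\<alpha>' * \<alpha> t))"
  have Lb: "\<forall>i<n. \<forall>u\<in>carrier_vec d. \<forall>s. subgrad d (f i) u s \<longrightarrow> vnorm s \<le> L" using H by (elim conjE) assumption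
  have ne: "\<Omega> \<noteq> {}" using H by (elim conjE) assumption
  have cv: "convex_vset d \<Omega>" using H by (elim conjE) assumption
  have cl: "closed_vset d \<Omega>" using H by (elim conjE) assumption
  have ds: "doubly_stochastic_pos n W" using H by (elim conjE) assumption
  have s1: "second_singular_value W < 1" using H by (elim conjE) assumption
  have apos: "\<forall>t. \<alpha> t > 0" using H by (elim conjE) assumption
  have adec: "\<forall>t. \<alpha> (Suc t) \<le> \<alpha> t" using H by (elim conjE) assumption
  have aC: "\<forall>t::nat. \<alpha> (t div 2) \<le> C\<alpha>' * \<alpha> t" using H by (elim conjE) assumption
  have gH: "\<forall>t. g t \<in> carrier_mat n d \<and> (\<forall>i<n. subgrad d (f i) (row (x t) i) (row (g t) i))" using H by (elim conjE) assumption
  have x0: "x 0 \<in> carrier_mat n d" using H by (elim conjE) assumption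
  have x0v: "\<exists>v\<in>\<Omega>. \<forall>i<n. row (x 0) i = v" using H by (elim conjE) assumption
  have xS: "\<forall>t. x (Suc t) = W * mat_of_rows d
            (map (\<lambda>i. proj \<Omega> (row (x t) i - \<alpha> t \<cdot>\<^sub>v row (g t) i)) [0..<n])" using H by (elim conjE) assumption
  from ds have Wc: "W \<in> carrier_mat n n" and rows: "\<forall>i<n. (\<Sum>j<n. W $$ (i,j)) = 1"
    and cols: "\<forall>j<n. (\<Sum>i<n. W $$ (i,j)) = 1"
    unfolding doubly_stochastic_pos_def by blast+
  interpret dstoch W n by (unfold_locales) (use Wc rows cols in auto)
  define \<sigma> where "\<sigma> = second_singular_value W"
  have s0: "\<sigma> \<ge> 0" using spectral_gap[OF s1] unfolding \<sigma>_def by blast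
  have s1': "\<sigma> < 1" using s1 unfolding \<sigma>_def .
  have xc: "x k \<in> carrier_mat n d" for k
  proof (induct k)
    case 0 then show ?case by (rule x0)
  next
    case (Suc k)
    have "mat_of_rows d (map (\<lambda>i. proj \<Omega> (row (x k) i - \<alpha> k \<cdot>\<^sub>v row (g k) i)) [0..<n]) \<in> carrier_mat n d"
      using mat_of_rows_carrier(1)[of d "map (\<lambda>i. proj \<Omega> (row (x k) i - \<alpha> k \<cdot>\<^sub>v row (g k) i)) [0..<n]"]
      by simp
    then show ?case using xS Wc by (metis mult_carrier_mat)
  qed
  have frobe: "frob (x k - avg_mat (x k)) = sqrt (dev n d (x k))" for k by (rule frob_dev[OF xc])
  show "frob (x t - avg_mat (x t)) \<le> 2 * C\<alpha>' * \<alpha> t * L * sqrt (real n) / (1 - second_singular_value W)"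
  proof (cases "n = 0")
    case True
    then show ?thesis unfolding frobe by (simp add: dev_def)
  next
    case False
    then have n: "n > 0" by simp
    have Gb: "\<forall>i<n. vnorm (row (g k) i) \<le> L" for k
    proof (intro allI impI)
      fix i assume i: "i < n"
      have "row (x k) i \<in> carrier_vec d" using xc[of k] i by auto
      then show "vnorm (row (g k) i) \<le> L" using Lb gH i by blast
    qed
    have L0: "L \<ge> 0" using Gb[of 0] n vnorm_nonneg[of "row (g 0) 0"] by force
    define e where "e k = sqrt (dev n d (x k))" for k
    have rec: "e (Suc k) \<le> \<sigma> * (e k + \<alpha> k * L * sqrt (real n))" for k
    proof -
      have ak: "\<alpha> k \<ge> 0" using apos less_imp_le by blast
      have gk: "g k \<in> carrier_mat n d" using gH by blast
      show ?thesis unfolding e_def \<sigma>_def using step[OF s1 xc gk Gb ak L0 ne cv cl] xS by simp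
    qed
    have e0: "e 0 = 0"
    proof -
      obtain v where v: "v \<in> \<Omega>" "\<forall>i<n. row (x 0) i = v" using x0v by blast
      have ent: "x 0 $$ (i,k) = v $ k" if "i < n" "k < d" for i k
      proof -
        have "row (x 0) i $ k = x 0 $$ (i,k)" using x0 that by simp
        then show ?thesis using v(2) that by simp
      qed
      have "cm n (x 0) k = v $ k" if "k < d" for k
        unfolding cm_def using ent[OF _ that] n by simp
      then have "dev n d (x 0) = 0" unfolding dev_def using ent by simp
      then show ?thesis unfolding e_def by simp
    qed
    define S where "S k = (\<Sum>j<k. \<sigma> ^ (k - j) * \<alpha> j)" for k
    have eS: "e k \<le> L * sqrt (real n) * S k" for k
    proof (induct k)
      case 0 then show ?case using e0 by (simp add: S_def)
    next
      case (Suc k)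
      have SS: "S (Suc k) = \<sigma> * S k + \<sigma> * \<alpha> k"
        unfolding S_def by (simp add: Suc_diff_le sum_distrib_left mult.assoc)
      have "e (Suc k) \<le> \<sigma> * (e k + \<alpha> k * L * sqrt (real n))" by (rule rec)
      also have "\<dots> \<le> \<sigma> * (L * sqrt (real n) * S k + \<alpha> k * L * sqrt (real n))"
        using Suc s0 by (intro mult_left_mono) auto
      also have "\<dots> = L * sqrt (real n) * S (Suc k)" unfolding SS by (simp add: algebra_simps)
      finally show ?case .
    qed
    have sup: "(SUP s. \<alpha> s) = \<alpha> 0"
    proof (rule cSup_eq_maximum)
      show "\<alpha> 0 \<in> range \<alpha>" by simp
      have dec: "decseq \<alpha>" using adec by (simp add: decseq_Suc_iff)
      show "y \<le> \<alpha> 0" if "y \<in> range \<alpha>" for y using that dec by (auto intro: decseqD)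
    qed
    have Sb: "S t \<le> 2 * C\<alpha>' * \<alpha> t / (1 - \<sigma>)"
      unfolding S_def by (rule S_bound[OF s0 s1' apos adec aC]) (use cond sup in \<open>simp add: \<sigma>_def\<close>)
    have "frob (x t - avg_mat (x t)) = e t" unfolding frobe e_def ..
    also have "\<dots> \<le> L * sqrt (real n) * S t" by (rule eS)
    also have "\<dots> \<le> L * sqrt (real n) * (2 * C\<alpha>' * \<alpha> t / (1 - \<sigma>))"
      by (rule mult_left_mono[OF Sb]) (use L0 in simp)
    also have "\<dots> = 2 * C\<alpha>' * \<alpha> t * L * sqrt (real n) / (1 - \<sigma>)" by simp
    finally show ?thesis unfolding \<sigma>_def .
  qed
qed


end
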